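(* Let $G$ be a finite GVZ-group with $|\mathrm{cd}(G)|=2$. Let $N$ be a normal subgroup of $G$ and $\chi\in\mathrm{nl}(G)$ such that $G'\not\subseteq N$ and $[Z(\chi),G]\subseteq N$. Then $N\subseteq Z(\chi)$.
   Context: All groups are finite. $\mathrm{Irr}(G)$ is the set of complex irreducible characters of $G$, $\mathrm{nl}(G)$ the set of non-linear irreducible characters, and $\mathrm{cd}(G)=\{\chi(1):\chi\in\mathrm{Irr}(G)\}$. For a character $\chi$, $Z(\chi)=\{g\in G: |\chi(g)|=\chi(1)\}$. A nonabelian group $G$ is a GVZ-group if for every $\chi\in\mathrm{Irr}(G)$ we have $\chi(g)=0$ for all $g\in G\setminus Z(\chi)$. *)

theory Defs
  imports "HOL-Algebra.Solvable_Groups" "Jordan_Normal_Form.Matrix"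
begin

definition mat_trace :: "complex mat \<Rightarrow> complex" where
  "mat_trace A = (\<Sum>i<dim_row A. A $$ (i,i))"

definition is_rep :: "('g, 'b) monoid_scheme \<Rightarrow> nat \<Rightarrow> ('g \<Rightarrow> complex mat) \<Rightarrow> bool" where
  "is_rep G n \<rho> \<longleftrightarrow> n > 0 \<and> (\<forall>g \<in> carrier G. \<rho> g \<in> carrier_mat n n)
     \<and> \<rho> \<one>\<^bsub>G\<^esub> = 1\<^sub>m n
     \<and> (\<forall>g \<in> carrier G. \<forall>h \<in> carrier G. \<rho> (g \<otimes>\<^bsub>G\<^esub> h) = \<rho> g * \<rho> h)"

definition is_subspace :: "nat \<Rightarrow> complex vec set \<Rightarrow> bool" where
  "is_subspace n W \<longleftrightarrow> W \<subseteq> carrier_vec n \<and> 0\<^sub>v n \<in> W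
     \<and> (\<forall>v \<in> W. \<forall>w \<in> W. v + w \<in> W) \<and> (\<forall>c. \<forall>v \<in> W. c \<cdot>\<^sub>v v \<in> W)"

definition is_irr_rep :: "('g, 'b) monoid_scheme \<Rightarrow> nat \<Rightarrow> ('g \<Rightarrow> complex mat) \<Rightarrow> bool" where
  "is_irr_rep G n \<rho> \<longleftrightarrow> is_rep G n \<rho> \<and>
     \<not> (\<exists>W. is_subspace n W \<and> W \<noteq> {0\<^sub>v n} \<and> W \<noteq> carrier_vec n
            \<and> (\<forall>g \<in> carrier G. \<forall>w \<in> W. \<rho> g *\<^sub>v w \<in> W))"

definition character_of :: "('g, 'b) monoid_scheme \<Rightarrow> ('g \<Rightarrow> complex mat) \<Rightarrow> 'g \<Rightarrow> complex" where
  "character_of G \<rho> = (\<lambda>g. if g \<in> carrier G then mat_trace (\<rho> g) else 0)"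

definition Irr :: "('g, 'b) monoid_scheme \<Rightarrow> ('g \<Rightarrow> complex) set" where
  "Irr G = {\<chi>. \<exists>n \<rho>. is_irr_rep G n \<rho> \<and> \<chi> = character_of G \<rho>}"

definition nl :: "('g, 'b) monoid_scheme \<Rightarrow> ('g \<Rightarrow> complex) set" where
  "nl G = {\<chi> \<in> Irr G. \<chi> \<one>\<^bsub>G\<^esub> \<noteq> 1}"

definition cd :: "('g, 'b) monoid_scheme \<Rightarrow> complex set" where
  "cd G = (\<lambda>\<chi>. \<chi> \<one>\<^bsub>G\<^esub>) ` Irr G"

definition char_center :: "('g, 'b) monoid_scheme \<Rightarrow> ('g \<Rightarrow> complex) \<Rightarrow> 'g set" where
  "char_center G \<chi> = {g \<in> carrier G. cmod (\<chi> g) = cmod (\<chi> \<one>\<^bsub>G\<^esub>)}"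

definition GVZ :: "('g, 'b) monoid_scheme \<Rightarrow> bool" where
  "GVZ G \<longleftrightarrow> (\<exists>x \<in> carrier G. \<exists>y \<in> carrier G. x \<otimes>\<^bsub>G\<^esub> y \<noteq> y \<otimes>\<^bsub>G\<^esub> x)
     \<and> (\<forall>\<chi> \<in> Irr G. \<forall>g \<in> carrier G - char_center G \<chi>. \<chi> g = 0)"

definition comm_subgroup :: "('g, 'b) monoid_scheme \<Rightarrow> 'g set \<Rightarrow> 'g set \<Rightarrow> 'g set" where
  "comm_subgroup G A B = generate G
     (\<Union>a \<in> A. \<Union>b \<in> B. {a \<otimes>\<^bsub>G\<^esub> b \<otimes>\<^bsub>G\<^esub> inv\<^bsub>G\<^esub> a \<otimes>\<^bsub>G\<^esub> inv\<^bsub>G\<^esub> b})"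

end

theory Submission imports Defs "Jordan_Normal_Form.DL_Rank" "Jordan_Normal_Form.Spectral_Radius"
begin
definition adj :: "complex mat \<Rightarrow> complex mat" where
  "adj A = mat (dim_col A) (dim_row A) (\<lambda>(i,j). cnj (A $$ (j,i)))"
lemma adj_dims[simp]: "dim_row (adj A) = dim_col A" "dim_col (adj A) = dim_row A"
  unfolding adj_def by simp_all
lemma adj_carrier[simp]: "A \<in> carrier_mat n m \<Longrightarrow> adj A \<in> carrier_mat m n"
  unfolding carrier_mat_def by simp
lemma adj_index[simp]: "i < dim_col A \<Longrightarrow> j < dim_row A \<Longrightarrow> adj A $$ (i,j) = cnj (A $$ (j,i))"
  unfolding adj_def by simp
lemma adj_adj[simp]: "adj (adj A) = A"
  by (rule eq_matI) simp_all
lemma adj_mult: assumes "A \<in> carrier_mat n m" "B \<in> carrier_mat m k"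
  shows "adj (A * B) = adj B * adj A"
proof (rule eq_matI)
  fix i j assume "i < dim_row (adj B * adj A)" "j < dim_col (adj B * adj A)"
  hence i: "i < k" and j: "j < n" using assms by auto
  have "adj (A*B) $$ (i,j) = cnj (\<Sum>l<m. A $$ (j,l) * B $$ (l,i))"
    using assms i j by (simp add: scalar_prod_def atLeast0LessThan)
  also have "\<dots> = (\<Sum>l<m. cnj (B $$ (l,i)) * cnj (A $$ (j,l)))"
    by (simp add: mult.commute)
  also have "\<dots> = (adj B * adj A) $$ (i,j)"
    using assms i j by (simp add: scalar_prod_def atLeast0LessThan)
  finally show "adj (A * B) $$ (i, j) = (adj B * adj A) $$ (i, j)" .
qed (use assms in auto)

lemma adj_one[simp]: "adj (1\<^sub>m n) = 1\<^sub>m n"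
  by (rule eq_matI) simp_all

lemma mat_trace_one[simp]: "mat_trace (1\<^sub>m n) = of_nat n"
  by (simp add: mat_trace_def)

lemma mat_trace_adj: "A \<in> carrier_mat n n \<Longrightarrow> mat_trace (adj A) = cnj (mat_trace A)"
  unfolding mat_trace_def carrier_mat_def by simp

lemma mat_trace_comm: assumes "A \<in> carrier_mat n m" "B \<in> carrier_mat m n"
  shows "mat_trace (A * B) = mat_trace (B * A)"
proof -
  have "mat_trace (A * B) = (\<Sum>i<n. \<Sum>j<m. A $$ (i,j) * B $$ (j,i))"
    using assms by (auto simp: mat_trace_def scalar_prod_def atLeast0LessThan)
  also have "\<dots> = (\<Sum>j<m. \<Sum>i<n. B $$ (j,i) * A $$ (i,j))"
    by (subst sum.swap) (simp add: mult.commute)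
  also have "\<dots> = mat_trace (B * A)"
    using assms by (auto simp: mat_trace_def scalar_prod_def atLeast0LessThan)
  finally show ?thesis .
qed

lemma sprod_adj: assumes "A \<in> carrier_mat n m" "u \<in> carrier_vec n" "v \<in> carrier_vec m"
  shows "conjugate u \<bullet> (A *\<^sub>v v) = conjugate (adj A *\<^sub>v u) \<bullet> v"
proof -
  have "conjugate u \<bullet> (A *\<^sub>v v) = (\<Sum>i<n. cnj (u $ i) * (\<Sum>j<m. A $$ (i,j) * v $ j))"
    using assms by (auto simp: scalar_prod_def atLeast0LessThan)
  also have "\<dots> = (\<Sum>i<n. \<Sum>j<m. cnj (u $ i) * A $$ (i,j) * v $ j)"
    by (simp add: sum_distrib_left mult.assoc)
  also have "\<dots> = (\<Sum>j<m. \<Sum>i<n. cnj (u $ i) * A $$ (i,j) * v $ j)"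
    by (rule sum.swap)
  also have "\<dots> = (\<Sum>j<m. cnj (\<Sum>i<n. cnj (A $$ (i,j)) * u $ i) * v $ j)"
    by (simp add: sum_distrib_left sum_distrib_right mult_ac)
  also have "\<dots> = conjugate (adj A *\<^sub>v u) \<bullet> v"
    using assms by (auto simp: scalar_prod_def atLeast0LessThan)
  finally show ?thesis .
qed

lemma mat_eq_by_vec: fixes A B :: "complex mat" assumes "A \<in> carrier_mat n m" "B \<in> carrier_mat n m"
  and "\<And>v. v \<in> carrier_vec m \<Longrightarrow> A *\<^sub>v v = B *\<^sub>v v"
  shows "A = B"
proof (rule eq_matI)
  fix i j assume i: "i < dim_row B" and j: "j < dim_col B"
  have "A *\<^sub>v unit_vec m j = B *\<^sub>v unit_vec m j" using assms(3) by auto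
  hence "(A *\<^sub>v unit_vec m j) $ i = (B *\<^sub>v unit_vec m j) $ i" by simp
  moreover have "dim_row A = n" "dim_col A = m" "dim_row B = n" "dim_col B = m" using assms by auto
  ultimately show "A $$ (i, j) = B $$ (i, j)" using i j by simp
qed (use assms in auto)

lemma inverse_exists: fixes A :: "complex mat" assumes A: "A \<in> carrier_mat n n"
  and ker: "\<And>v. v \<in> carrier_vec n \<Longrightarrow> A *\<^sub>v v = 0\<^sub>v n \<Longrightarrow> v = 0\<^sub>v n"
  shows "\<exists>B \<in> carrier_mat n n. A * B = 1\<^sub>m n \<and> B * A = 1\<^sub>m n"
proof -
  have "det A \<noteq> 0" using det_0_iff_vec_prod_zero_field[OF A] ker by auto
  from det_non_zero_imp_unit[OF A this, of undefined]
  show ?thesis unfolding Units_def by (auto simp: ring_mat_def)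
qed


lemma mult_index: "A \<in> carrier_mat n m \<Longrightarrow> B \<in> carrier_mat m k \<Longrightarrow> i < n \<Longrightarrow> j < k \<Longrightarrow>
  (A * B) $$ (i,j) = (\<Sum>l<m. A $$ (i,l) * B $$ (l,j))"
  by (simp add: scalar_prod_def atLeast0LessThan)

lemma mult_vec_index: "A \<in> carrier_mat n m \<Longrightarrow> x \<in> carrier_vec m \<Longrightarrow> i < n \<Longrightarrow>
  (A *\<^sub>v x) $ i = (\<Sum>j<m. A $$ (i,j) * x $ j)"
  by (simp add: scalar_prod_def atLeast0LessThan)

lemma sprod_index: "x \<in> carrier_vec n \<Longrightarrow> y \<bullet> x = (\<Sum>i<n. y $ i * x $ i)"
  by (simp add: scalar_prod_def atLeast0LessThan)

lemma (in group) bij_mult_right: "g \<in> carrier G \<Longrightarrow> bij_betw (\<lambda>h. h \<otimes> g) (carrier G) (carrier G)"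
  by (rule bij_betw_byWitness[where f'="\<lambda>h. h \<otimes> inv g"]) (auto simp: m_assoc)

lemma (in group) bij_mult_left: "g \<in> carrier G \<Longrightarrow> bij_betw (\<lambda>h. g \<otimes> h) (carrier G) (carrier G)"
  by (rule bij_betw_byWitness[where f'="\<lambda>h. inv g \<otimes> h"]) (auto simp: m_assoc[symmetric])

subsection \<open>Sums of matrices\<close>

definition msum :: "nat \<Rightarrow> 'a set \<Rightarrow> ('a \<Rightarrow> complex mat) \<Rightarrow> complex mat" where
  "msum n S f = mat n n (\<lambda>(i,j). \<Sum>g\<in>S. f g $$ (i,j))"

lemma msum_dims[simp]: "dim_row (msum n S f) = n" "dim_col (msum n S f) = n"
  unfolding msum_def by simp_all

lemma msum_carrier[simp]: "msum n S f \<in> carrier_mat n n"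
  unfolding carrier_mat_def by simp

lemma msum_index[simp]: "i < n \<Longrightarrow> j < n \<Longrightarrow> msum n S f $$ (i,j) = (\<Sum>g\<in>S. f g $$ (i,j))"
  unfolding msum_def by simp

lemma msum_cong: "(\<And>g. g \<in> S \<Longrightarrow> f g = f' g) \<Longrightarrow> msum n S f = msum n S f'"
  unfolding msum_def by (rule eq_matI) simp_all

lemma msum_mult_right: assumes f: "\<And>g. g \<in> S \<Longrightarrow> f g \<in> carrier_mat n n" and B: "B \<in> carrier_mat n n"
  shows "msum n S f * B = msum n S (\<lambda>g. f g * B)"
proof (rule eq_matI)
  fix i j assume "i < dim_row (msum n S (\<lambda>g. f g * B))" "j < dim_col (msum n S (\<lambda>g. f g * B))"
  hence i: "i < n" and j: "j < n" by simp_all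
  have "(msum n S f * B) $$ (i,j) = (\<Sum>l<n. (\<Sum>g\<in>S. f g $$ (i,l)) * B $$ (l,j))"
    using B i j by (simp add: scalar_prod_def atLeast0LessThan)
  also have "\<dots> = (\<Sum>g\<in>S. \<Sum>l<n. f g $$ (i,l) * B $$ (l,j))"
    by (simp add: sum_distrib_right sum.swap[of _ S])
  also have "\<dots> = msum n S (\<lambda>g. f g * B) $$ (i,j)"
    using i j by (simp add: mult_index[OF f B i j])
  finally show "(msum n S f * B) $$ (i,j) = msum n S (\<lambda>g. f g * B) $$ (i,j)" .
qed (use B in simp_all)

lemma msum_mult_left: assumes f: "\<And>g. g \<in> S \<Longrightarrow> f g \<in> carrier_mat n n" and B: "B \<in> carrier_mat n n"
  shows "B * msum n S f = msum n S (\<lambda>g. B * f g)"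
proof (rule eq_matI)
  fix i j assume "i < dim_row (msum n S (\<lambda>g. B * f g))" "j < dim_col (msum n S (\<lambda>g. B * f g))"
  hence i: "i < n" and j: "j < n" by simp_all
  have "(B * msum n S f) $$ (i,j) = (\<Sum>l<n. B $$ (i,l) * (\<Sum>g\<in>S. f g $$ (l,j)))"
    using B i j by (simp add: scalar_prod_def atLeast0LessThan)
  also have "\<dots> = (\<Sum>g\<in>S. \<Sum>l<n. B $$ (i,l) * f g $$ (l,j))"
    by (simp add: sum_distrib_left sum.swap[of _ S])
  also have "\<dots> = msum n S (\<lambda>g. B * f g) $$ (i,j)"
    using i j by (simp add: mult_index[OF B f i j])
  finally show "(B * msum n S f) $$ (i,j) = msum n S (\<lambda>g. B * f g) $$ (i,j)" .
qed (use B in simp_all)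

lemma msum_reindex: assumes "bij_betw h S S"
  shows "msum n S (\<lambda>g. f (h g)) = msum n S f"
  unfolding msum_def
proof (rule eq_matI)
  fix i j
  show "mat n n (\<lambda>(i, j). \<Sum>g\<in>S. f (h g) $$ (i, j)) $$ (i, j) = mat n n (\<lambda>(i, j). \<Sum>g\<in>S. f g $$ (i, j)) $$ (i, j)"
    if "i < dim_row (mat n n (\<lambda>(i, j). \<Sum>g\<in>S. f g $$ (i, j)))"
       "j < dim_col (mat n n (\<lambda>(i, j). \<Sum>g\<in>S. f g $$ (i, j)))"
    using that sum.reindex_bij_betw[OF assms, of "\<lambda>g. f g $$ (i,j)"] by simp
qed simp_all

lemma mat_trace_msum: assumes "\<And>g. g \<in> S \<Longrightarrow> f g \<in> carrier_mat n n"
  shows "mat_trace (msum n S f) = (\<Sum>g\<in>S. mat_trace (f g))"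
proof -
  have "mat_trace (msum n S f) = (\<Sum>i<n. \<Sum>g\<in>S. f g $$ (i,i))"
    by (simp add: mat_trace_def)
  also have "\<dots> = (\<Sum>g\<in>S. \<Sum>i<n. f g $$ (i,i))" by (rule sum.swap)
  also have "\<dots> = (\<Sum>g\<in>S. mat_trace (f g))"
    using assms by (intro sum.cong) (auto simp: mat_trace_def)
  finally show ?thesis .
qed

lemma msum_mult_vec: assumes "\<And>g. g \<in> S \<Longrightarrow> f g \<in> carrier_mat n n" "x \<in> carrier_vec n" "y \<in> carrier_vec n"
  shows "y \<bullet> (msum n S f *\<^sub>v x) = (\<Sum>g\<in>S. y \<bullet> (f g *\<^sub>v x))"
proof -
  have "y \<bullet> (msum n S f *\<^sub>v x) = (\<Sum>i<n. y $ i * (\<Sum>j<n. (\<Sum>g\<in>S. f g $$ (i,j)) * x $ j))"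
    using assms by (simp add: scalar_prod_def atLeast0LessThan)
  also have "\<dots> = (\<Sum>g\<in>S. \<Sum>i<n. y $ i * (\<Sum>j<n. f g $$ (i,j) * x $ j))"
    by (simp add: sum_distrib_left sum_distrib_right sum.swap[of _ S] mult_ac)
  also have "\<dots> = (\<Sum>g\<in>S. y \<bullet> (f g *\<^sub>v x))"
  proof (intro sum.cong refl)
    fix g assume g: "g \<in> S"
    have fx: "f g *\<^sub>v x \<in> carrier_vec n" using assms(1)[OF g] assms(2) by simp
    show "(\<Sum>i<n. y $ i * (\<Sum>j<n. f g $$ (i,j) * x $ j)) = y \<bullet> (f g *\<^sub>v x)"
      unfolding sprod_index[OF fx] using mult_vec_index[OF assms(1)[OF g] assms(2)] by simp
  qed
  finally show ?thesis .
qed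

subsection \<open>Representations\<close>

lemma rep_carrier: "is_rep G n R \<Longrightarrow> g \<in> carrier G \<Longrightarrow> R g \<in> carrier_mat n n"
  unfolding is_rep_def by blast

lemma rep_mult: "is_rep G n R \<Longrightarrow> g \<in> carrier G \<Longrightarrow> h \<in> carrier G \<Longrightarrow> R (g \<otimes>\<^bsub>G\<^esub> h) = R g * R h"
  unfolding is_rep_def by blast

lemma rep_one: "is_rep G n R \<Longrightarrow> R \<one>\<^bsub>G\<^esub> = 1\<^sub>m n"
  unfolding is_rep_def by blast

lemma rep_pos: "is_rep G n R \<Longrightarrow> 0 < n"
  unfolding is_rep_def by blast

lemma rep_inv: assumes "group G" "is_rep G n R" "g \<in> carrier G"
  shows "R (inv\<^bsub>G\<^esub> g) * R g = 1\<^sub>m n" "R g * R (inv\<^bsub>G\<^esub> g) = 1\<^sub>m n"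
  using rep_mult[OF assms(2), of "inv\<^bsub>G\<^esub> g" g] rep_mult[OF assms(2), of g "inv\<^bsub>G\<^esub> g"]
    assms rep_one[OF assms(2)] by (simp_all add: group.l_inv group.r_inv group.inv_closed)


lemma conj_square_nonneg: "w \<in> carrier_vec n \<Longrightarrow> conjugate w \<bullet> (w :: complex vec) \<ge> 0"
  using conjugate_vec_sprod_comm[of w n w] conjugate_square_ge_0_vec[of w] by simp

lemma conj_square_zero: "w \<in> carrier_vec n \<Longrightarrow> conjugate w \<bullet> (w :: complex vec) = 0 \<Longrightarrow> w = 0\<^sub>v n"
  using conjugate_vec_sprod_comm[of w n w] conjugate_square_eq_0_vec[of w n] by simp

definition Pm :: "('g,'b) monoid_scheme \<Rightarrow> nat \<Rightarrow> ('g \<Rightarrow> complex mat) \<Rightarrow> complex mat" where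
  "Pm G n R = msum n (carrier G) (\<lambda>h. adj (R h) * R h)"

locale frep = group G for G :: "('g,'b) monoid_scheme" (structure) +
  fixes n :: nat and R :: "'g \<Rightarrow> complex mat"
  assumes fin: "finite (carrier G)" and rep: "is_rep G n R"
begin

lemma Rc[simp]: "g \<in> carrier G \<Longrightarrow> R g \<in> carrier_mat n n"
  using rep_carrier[OF rep] .

lemma Rm: "g \<in> carrier G \<Longrightarrow> h \<in> carrier G \<Longrightarrow> R (g \<otimes> h) = R g * R h"
  using rep_mult[OF rep] .

lemma R1[simp]: "R \<one> = 1\<^sub>m n"
  using rep_one[OF rep] .

lemma Rinv: "g \<in> carrier G \<Longrightarrow> R (inv g) * R g = 1\<^sub>m n" "g \<in> carrier G \<Longrightarrow> R g * R (inv g) = 1\<^sub>m n"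
  using rep_inv[OF is_group rep] by auto

lemma Rvc[simp]: "g \<in> carrier G \<Longrightarrow> v \<in> carrier_vec n \<Longrightarrow> R g *\<^sub>v v \<in> carrier_vec n"
  by (rule mult_mat_vec_carrier[OF Rc])

lemma adjRc[simp]: "g \<in> carrier G \<Longrightarrow> adj (R g) \<in> carrier_mat n n"
  by (rule adj_carrier[OF Rc])

lemma aRc: "h \<in> carrier G \<Longrightarrow> adj (R h) * R h \<in> carrier_mat n n"
  by (rule mult_carrier_mat[OF adjRc Rc])

abbreviation "P \<equiv> Pm G n R"

lemma P_carrier[simp]: "P \<in> carrier_mat n n"
  unfolding Pm_def by simp

lemma P_dims[simp]: "dim_row P = n" "dim_col P = n"
  unfolding Pm_def by simp_all

lemma Pvc[simp]: "v \<in> carrier_vec n \<Longrightarrow> P *\<^sub>v v \<in> carrier_vec n"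
  by (rule mult_mat_vec_carrier[OF P_carrier])

lemma assoc4: assumes A: "A \<in> carrier_mat n n" and B: "B \<in> carrier_mat n n"
  and C: "C \<in> carrier_mat n n" and D: "D \<in> carrier_mat n n"
  shows "A * (B * C) * D = (A * B) * (C * D)"
proof -
  have 1: "A * (B * C) * D = A * ((B * C) * D)" by (rule assoc_mult_mat[OF A mult_carrier_mat[OF B C] D])
  have 2: "(B * C) * D = B * (C * D)" by (rule assoc_mult_mat[OF B C D])
  have 3: "(A * B) * (C * D) = A * (B * (C * D))" by (rule assoc_mult_mat[OF A B mult_carrier_mat[OF C D]])
  show ?thesis unfolding 1 2 3 ..
qed

lemma P_inv: assumes g: "g \<in> carrier G" shows "adj (R g) * P * R g = P"
proof -
  have c2: "\<And>h. h \<in> carrier G \<Longrightarrow> adj (R g) * (adj (R h) * R h) \<in> carrier_mat n n"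
    by (rule mult_carrier_mat[OF adjRc[OF g] aRc])
  have "adj (R g) * P = msum n (carrier G) (\<lambda>h. adj (R g) * (adj (R h) * R h))"
    unfolding Pm_def by (rule msum_mult_left[OF aRc adjRc[OF g]])
  hence "adj (R g) * P * R g = msum n (carrier G) (\<lambda>h. adj (R g) * (adj (R h) * R h)) * R g"
    by simp
  also have "\<dots> = msum n (carrier G) (\<lambda>h. adj (R g) * (adj (R h) * R h) * R g)"
    by (rule msum_mult_right[OF c2 Rc[OF g]])
  also have "\<dots> = msum n (carrier G) (\<lambda>h. adj (R (h \<otimes> g)) * R (h \<otimes> g))"
  proof (rule msum_cong)
    fix h assume h: "h \<in> carrier G"
    have "adj (R (h \<otimes> g)) * R (h \<otimes> g) = (adj (R g) * adj (R h)) * (R h * R g)"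
      using adj_mult[OF Rc[OF h] Rc[OF g]] Rm[OF h g] by simp
    also have "\<dots> = adj (R g) * (adj (R h) * R h) * R g"
      using assoc4[OF adjRc[OF g] adjRc[OF h] Rc[OF h] Rc[OF g]] by simp
    finally show "adj (R g) * (adj (R h) * R h) * R g = adj (R (h \<otimes> g)) * R (h \<otimes> g)" by simp
  qed
  also have "\<dots> = P"
    unfolding Pm_def using msum_reindex[OF bij_mult_right[OF g], of n "\<lambda>h. adj (R h) * R h"] .
  finally show ?thesis .
qed

lemma P_pos: assumes y: "y \<in> carrier_vec n" and z: "conjugate y \<bullet> (P *\<^sub>v y) = 0"
  shows "y = 0\<^sub>v n"
proof -
  have trm: "conjugate y \<bullet> ((adj (R h) * R h) *\<^sub>v y) = conjugate (R h *\<^sub>v y) \<bullet> (R h *\<^sub>v y)"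
    if h: "h \<in> carrier G" for h
  proof -
    have "(adj (R h) * R h) *\<^sub>v y = adj (R h) *\<^sub>v (R h *\<^sub>v y)"
      by (rule assoc_mult_mat_vec[OF adjRc[OF h] Rc[OF h] y])
    moreover have "conjugate y \<bullet> (adj (R h) *\<^sub>v (R h *\<^sub>v y)) = conjugate (adj (adj (R h)) *\<^sub>v y) \<bullet> (R h *\<^sub>v y)"
      by (rule sprod_adj[OF adjRc[OF h] y Rvc[OF h y]])
    ultimately show ?thesis by simp
  qed
  have "conjugate y \<bullet> (P *\<^sub>v y) = (\<Sum>h\<in>carrier G. conjugate y \<bullet> ((adj (R h) * R h) *\<^sub>v y))"
    unfolding Pm_def by (rule msum_mult_vec[OF aRc y carrier_vec_conjugate[OF y]])
  also have "\<dots> = (\<Sum>h\<in>carrier G. conjugate (R h *\<^sub>v y) \<bullet> (R h *\<^sub>v y))"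
    by (rule sum.cong[OF refl trm])
  finally have "(\<Sum>h\<in>carrier G. conjugate (R h *\<^sub>v y) \<bullet> (R h *\<^sub>v y)) = 0" using z by simp
  moreover have "\<And>h. h \<in> carrier G \<Longrightarrow> conjugate (R h *\<^sub>v y) \<bullet> (R h *\<^sub>v y) \<ge> 0"
    using y by (intro conj_square_nonneg[of _ n]) simp
  ultimately have "\<forall>h\<in>carrier G. conjugate (R h *\<^sub>v y) \<bullet> (R h *\<^sub>v y) = 0"
    using sum_nonneg_eq_0_iff[OF fin, of "\<lambda>h. conjugate (R h *\<^sub>v y) \<bullet> (R h *\<^sub>v y)"] by blast
  hence "conjugate (R \<one> *\<^sub>v y) \<bullet> (R \<one> *\<^sub>v y) = 0" by (rule bspec) simp
  hence "conjugate y \<bullet> y = 0" using y by simp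
  thus ?thesis using conj_square_zero y by blast
qed

lemma P_ker: "y \<in> carrier_vec n \<Longrightarrow> P *\<^sub>v y = 0\<^sub>v n \<Longrightarrow> y = 0\<^sub>v n"
  using P_pos[of y] scalar_prod_right_zero[of "conjugate y" n] by simp

lemma P_comm: assumes g: "g \<in> carrier G" shows "P * R g = adj (R (inv g)) * P"
proof -
  have ig: "inv g \<in> carrier G" using g by simp
  have cs: "adj (R (inv g)) \<in> carrier_mat n n" "R (inv g) \<in> carrier_mat n n" "R g \<in> carrier_mat n n"
    using g ig by simp_all
  have "P * R g = adj (R (inv g)) * P * R (inv g) * R g" using P_inv[OF ig] by simp
  also have "\<dots> = adj (R (inv g)) * P * (R (inv g) * R g)"
    by (rule assoc_mult_mat[OF mult_carrier_mat[OF cs(1) P_carrier] cs(2) cs(3)])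
  also have "\<dots> = adj (R (inv g)) * P" unfolding Rinv(1)[OF g]
    by (rule right_mult_one_mat[OF mult_carrier_mat[OF cs(1) P_carrier]])
  finally show ?thesis .
qed

lemma char_inv: assumes g: "g \<in> carrier G" shows "mat_trace (R (inv g)) = cnj (mat_trace (R g))"
proof -
  have ig: "inv g \<in> carrier G" using g by simp
  obtain Q where Q: "Q \<in> carrier_mat n n" "P * Q = 1\<^sub>m n" "Q * P = 1\<^sub>m n"
    using inverse_exists[OF P_carrier P_ker] by blast
  have cs: "adj (R (inv g)) \<in> carrier_mat n n" "R g \<in> carrier_mat n n"
    using g ig by simp_all
  have "adj (R (inv g)) * P * Q = adj (R (inv g)) * (P * Q)"
    by (rule assoc_mult_mat[OF cs(1) P_carrier Q(1)])
  hence "adj (R (inv g)) = adj (R (inv g)) * P * Q" using Q(2) right_mult_one_mat[OF cs(1)] by simp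
  also have "\<dots> = P * R g * Q" using P_comm[OF g] by simp
  also have "\<dots> = P * (R g * Q)" by (rule assoc_mult_mat[OF P_carrier cs(2) Q(1)])
  finally have "mat_trace (adj (R (inv g))) = mat_trace (P * (R g * Q))" by simp
  also have "\<dots> = mat_trace ((R g * Q) * P)" using cs Q P_carrier by (intro mat_trace_comm[of _ n n] mult_carrier_mat)
  also have "\<dots> = mat_trace (R g * (Q * P))" by (subst assoc_mult_mat[OF cs(2) Q(1) P_carrier]) (rule refl)
  also have "\<dots> = mat_trace (R g)" using Q(3) right_mult_one_mat[OF cs(2)] by simp
  finally have "cnj (mat_trace (R (inv g))) = mat_trace (R g)" using mat_trace_adj[of _ n] ig by simp
  thus ?thesis by (metis complex_cnj_cnj)
qed


lemma mult_nn: "(A :: complex mat) \<in> carrier_mat n n \<Longrightarrow> B \<in> carrier_mat n n \<Longrightarrow> A * B \<in> carrier_mat n n"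
  by (rule mult_carrier_mat)

lemma massoc: "(A :: complex mat) \<in> carrier_mat n n \<Longrightarrow> B \<in> carrier_mat n n \<Longrightarrow> C \<in> carrier_mat n n \<Longrightarrow> A * B * C = A * (B * C)"
  by (rule assoc_mult_mat)

lemma mone1: "(A :: complex mat) \<in> carrier_mat n n \<Longrightarrow> A * 1\<^sub>m n = A"
  by (rule right_mult_one_mat)

lemma mone2: "(A :: complex mat) \<in> carrier_mat n n \<Longrightarrow> 1\<^sub>m n * A = A"
  by (rule left_mult_one_mat)

lemma Rinv_nn: "g \<in> carrier G \<Longrightarrow> A \<in> carrier_mat n n \<Longrightarrow> R (inv g) * (R g * A) = A"
  "g \<in> carrier G \<Longrightarrow> A \<in> carrier_mat n n \<Longrightarrow> R g * (R (inv g) * A) = A"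
proof -
  assume g: "g \<in> carrier G" and A: "A \<in> carrier_mat n n"
  have ig: "inv g \<in> carrier G" using g by simp
  show "R (inv g) * (R g * A) = A"
    using massoc[OF Rc[OF ig] Rc[OF g] A] Rinv(1)[OF g] mone2[OF A] by simp
  show "R g * (R (inv g) * A) = A"
    using massoc[OF Rc[OF g] Rc[OF ig] A] Rinv(2)[OF g] mone2[OF A] by simp
qed

definition "Tm X = msum n (carrier G) (\<lambda>g. R g * X * R (inv g))"

lemma Tm_carrier: "Tm X \<in> carrier_mat n n"
  unfolding Tm_def by simp

lemma Tm_comm: assumes h: "h \<in> carrier G" and X: "X \<in> carrier_mat n n"
  shows "Tm X * R h = R h * Tm X"
proof -
  have ih: "inv h \<in> carrier G" using h by simp
  have c1: "\<And>g. g \<in> carrier G \<Longrightarrow> R g * X * R (inv g) \<in> carrier_mat n n"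
    using X by (intro mult_nn Rc) simp_all
  have "Tm X * R h = msum n (carrier G) (\<lambda>g. R g * X * R (inv g) * R h)"
    unfolding Tm_def by (rule msum_mult_right[OF c1 Rc[OF h]])
  also have "\<dots> = msum n (carrier G) (\<lambda>g. R (h \<otimes> g) * X * R (inv (h \<otimes> g)) * R h)"
    by (rule msum_reindex[OF bij_mult_left[OF h], symmetric])
  also have "\<dots> = msum n (carrier G) (\<lambda>g. R h * (R g * X * R (inv g)))"
  proof (rule msum_cong)
    fix g assume g: "g \<in> carrier G"
    have ig: "inv g \<in> carrier G" using g by simp
    have "R (h \<otimes> g) * X * R (inv (h \<otimes> g)) * R h = R h * R g * X * (R (inv g) * R (inv h)) * R h"
      using g h by (simp add: Rm inv_mult_group)
    also have "\<dots> = R h * (R g * (X * (R (inv g) * (R (inv h) * R h))))"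
      using g h ig ih X by (simp only: massoc mult_nn Rc)
    also have "\<dots> = R h * (R g * X * R (inv g))"
      using g h ig ih X Rinv(1)[OF h] mone1[OF Rc[OF ig]] by (simp only: massoc mult_nn Rc)
    finally show "R (h \<otimes> g) * X * R (inv (h \<otimes> g)) * R h = R h * (R g * X * R (inv g))" .
  qed
  also have "\<dots> = R h * Tm X"
    unfolding Tm_def by (rule msum_mult_left[OF c1 Rc[OF h], symmetric])
  finally show ?thesis .
qed

lemma Tm_trace: assumes X: "X \<in> carrier_mat n n"
  shows "mat_trace (Tm X) = of_nat (card (carrier G)) * mat_trace X"
proof -
  have c1: "\<And>g. g \<in> carrier G \<Longrightarrow> R g * X * R (inv g) \<in> carrier_mat n n"
    using X by (intro mult_nn Rc) simp_all
  have "mat_trace (Tm X) = (\<Sum>g\<in>carrier G. mat_trace (R g * X * R (inv g)))"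
    unfolding Tm_def by (rule mat_trace_msum[OF c1])
  also have "\<dots> = (\<Sum>g\<in>carrier G. mat_trace X)"
  proof (rule sum.cong[OF refl])
    fix g assume g: "g \<in> carrier G"
    have ig: "inv g \<in> carrier G" using g by simp
    have "mat_trace (R g * X * R (inv g)) = mat_trace (R (inv g) * (R g * X))"
      by (rule mat_trace_comm[OF mult_nn[OF Rc[OF g] X] Rc[OF ig]])
    also have "\<dots> = mat_trace X" using Rinv_nn(1)[OF g X] by simp
    finally show "mat_trace (R g * X * R (inv g)) = mat_trace X" .
  qed
  also have "\<dots> = of_nat (card (carrier G)) * mat_trace X" by simp
  finally show ?thesis .
qed

end

lemma smult_one_vec: "v \<in> carrier_vec n \<Longrightarrow> (c \<cdot>\<^sub>m 1\<^sub>m n) *\<^sub>v v = (c :: complex) \<cdot>\<^sub>v v"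
  by (intro eq_vecI) (simp_all add: mult_vec_index[of _ n n] sum.delta)

lemma schur: assumes irr: "is_irr_rep G n R" and A: "A \<in> carrier_mat n n"
  and comm: "\<And>g. g \<in> carrier G \<Longrightarrow> A * R g = R g * A"
  shows "\<exists>c. A = c \<cdot>\<^sub>m 1\<^sub>m n"
proof -
  have rep: "is_rep G n R" using irr unfolding is_irr_rep_def by blast
  have n: "0 < n" using rep_pos[OF rep] .
  obtain c where "eigenvalue A c" using spectrum_non_empty[OF A n] unfolding spectrum_def by blast
  then obtain v where v: "v \<in> carrier_vec n" "v \<noteq> 0\<^sub>v n" "A *\<^sub>v v = c \<cdot>\<^sub>v v"
    unfolding eigenvalue_def eigenvector_def using A by auto
  define W where "W = {w \<in> carrier_vec n. A *\<^sub>v w = c \<cdot>\<^sub>v w}"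
  have sub: "is_subspace n W"
    unfolding is_subspace_def W_def
  proof (intro conjI ballI allI)
    show "0\<^sub>v n \<in> {w \<in> carrier_vec n. A *\<^sub>v w = c \<cdot>\<^sub>v w}" using A by auto
  next
    fix x y assume x: "x \<in> {w \<in> carrier_vec n. A *\<^sub>v w = c \<cdot>\<^sub>v w}" and y: "y \<in> {w \<in> carrier_vec n. A *\<^sub>v w = c \<cdot>\<^sub>v w}"
    show "x + y \<in> {w \<in> carrier_vec n. A *\<^sub>v w = c \<cdot>\<^sub>v w}"
      using x y A by (simp add: mult_add_distrib_mat_vec[OF A] smult_add_distrib_vec[of _ n])
  next
    fix d x assume x: "x \<in> {w \<in> carrier_vec n. A *\<^sub>v w = c \<cdot>\<^sub>v w}"
    show "d \<cdot>\<^sub>v x \<in> {w \<in> carrier_vec n. A *\<^sub>v w = c \<cdot>\<^sub>v w}"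
      using x A by (simp add: mult_mat_vec[OF A] smult_smult_assoc mult.commute)
  qed auto
  have inv: "\<forall>g \<in> carrier G. \<forall>w \<in> W. R g *\<^sub>v w \<in> W"
  proof (intro ballI)
    fix g w assume g: "g \<in> carrier G" and w: "w \<in> W"
    have Rg: "R g \<in> carrier_mat n n" using rep_carrier[OF rep g] .
    have wc: "w \<in> carrier_vec n" and Aw: "A *\<^sub>v w = c \<cdot>\<^sub>v w" using w unfolding W_def by auto
    have "A *\<^sub>v (R g *\<^sub>v w) = (A * R g) *\<^sub>v w" using assoc_mult_mat_vec[OF A Rg wc] by simp
    also have "\<dots> = (R g * A) *\<^sub>v w" using comm[OF g] by simp
    also have "\<dots> = R g *\<^sub>v (c \<cdot>\<^sub>v w)" using assoc_mult_mat_vec[OF Rg A wc] Aw by simp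
    also have "\<dots> = c \<cdot>\<^sub>v (R g *\<^sub>v w)" by (rule mult_mat_vec[OF Rg wc])
    finally show "R g *\<^sub>v w \<in> W" unfolding W_def using mult_mat_vec_carrier[OF Rg wc] by simp
  qed
  have "W \<noteq> {0\<^sub>v n}" using v unfolding W_def by auto
  hence "W = carrier_vec n" using irr sub inv unfolding is_irr_rep_def by blast
  hence "\<And>w. w \<in> carrier_vec n \<Longrightarrow> A *\<^sub>v w = (c \<cdot>\<^sub>m 1\<^sub>m n) *\<^sub>v w"
    unfolding W_def using smult_one_vec by auto
  hence "A = c \<cdot>\<^sub>m 1\<^sub>m n" by (intro mat_eq_by_vec[OF A]) simp_all
  thus ?thesis by blast
qed


definition Emat :: "nat \<Rightarrow> nat \<Rightarrow> nat \<Rightarrow> complex mat" where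
  "Emat n i k = mat n n (\<lambda>(a,b). if a = i \<and> b = k then 1 else 0)"

lemma Emat_carrier: "Emat n i k \<in> carrier_mat n n"
  unfolding Emat_def carrier_mat_def by simp

lemma Emat_trace: "i < n \<Longrightarrow> k < n \<Longrightarrow> mat_trace (Emat n i k) = (if i = k then 1 else 0)"
  unfolding Emat_def mat_trace_def by (simp add: sum.delta)

lemma E_sand: assumes A: "A \<in> carrier_mat n n" and B: "B \<in> carrier_mat n n"
  and i: "i < n" and k: "k < n" and a: "a < n" and b: "b < n"
  shows "(A * Emat n i k * B) $$ (a,b) = A $$ (a,i) * B $$ (k,b)"
proof -
  have AE: "(A * Emat n i k) $$ (a,l) = (if l = k then A $$ (a,i) else 0)" if l: "l < n" for l
  proof -
    have "(A * Emat n i k) $$ (a,l) = (\<Sum>m<n. A $$ (a,m) * Emat n i k $$ (m,l))"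
      by (rule mult_index[OF A Emat_carrier a l])
    also have "\<dots> = (\<Sum>m<n. if m = i then (if l = k then A $$ (a,i) else 0) else 0)"
      using l by (intro sum.cong refl) (simp add: Emat_def)
    also have "\<dots> = (if l = k then A $$ (a,i) else 0)" using i by (simp add: sum.delta)
    finally show ?thesis .
  qed
  have "(A * Emat n i k * B) $$ (a,b) = (\<Sum>l<n. (A * Emat n i k) $$ (a,l) * B $$ (l,b))"
    by (rule mult_index[OF mult_carrier_mat[OF A Emat_carrier] B a b])
  also have "\<dots> = (\<Sum>l<n. if l = k then A $$ (a,i) * B $$ (k,b) else 0)"
    by (intro sum.cong refl) (simp add: AE)
  also have "\<dots> = A $$ (a,i) * B $$ (k,b)" using k by (simp add: sum.delta)
  finally show ?thesis .
qed

lemma smult_one_trace: "mat_trace (c \<cdot>\<^sub>m 1\<^sub>m n) = c * of_nat n"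
  unfolding mat_trace_def by simp

locale firr = frep +
  assumes irr: "is_irr_rep G n R"
begin

lemma npos: "0 < n" using rep_pos[OF rep] .

lemma orth: assumes i: "i < n" and k: "k < n"
  shows "(\<Sum>g\<in>carrier G. R g $$ (i,i) * R (inv g) $$ (k,k)) =
    (if i = k then of_nat (card (carrier G)) / of_nat n else 0)"
proof -
  let ?E = "Emat n i k"
  obtain c where c: "Tm ?E = c \<cdot>\<^sub>m 1\<^sub>m n"
    using schur[OF irr Tm_carrier] Tm_comm[OF _ Emat_carrier] by blast
  have t1: "mat_trace (Tm ?E) = c * of_nat n" using c smult_one_trace by simp
  have t2: "mat_trace (Tm ?E) = of_nat (card (carrier G)) * mat_trace ?E" by (rule Tm_trace[OF Emat_carrier])
  have ceq: "c * of_nat n = of_nat (card (carrier G)) * (if i = k then 1 else 0)"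
    using t1 t2 Emat_trace[OF i k] by simp
  have n0: "(of_nat n :: complex) \<noteq> 0" using npos by simp
  have cval: "c = (if i = k then of_nat (card (carrier G)) / of_nat n else 0)"
  proof (cases "i = k")
    case True
    then show ?thesis using ceq n0 by (simp add: field_simps)
  next
    case False
    then show ?thesis using ceq n0 by simp
  qed
  have "(\<Sum>g\<in>carrier G. R g $$ (i,i) * R (inv g) $$ (k,k)) = (\<Sum>g\<in>carrier G. (R g * ?E * R (inv g)) $$ (i,k))"
    by (intro sum.cong refl) (simp add: E_sand[OF Rc Rc i k i k])
  also have "\<dots> = Tm ?E $$ (i,k)" unfolding Tm_def using i k by simp
  also have "\<dots> = (if i = k then c else 0)" using c i k by simp
  finally show ?thesis using cval by simp
qed

lemma trR: assumes g: "g \<in> carrier G" shows "mat_trace (R g) = (\<Sum>i<n. R g $$ (i,i))"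
proof -
  have "dim_row (R g) = n" using Rc[OF g] by (rule carrier_matD(1))
  thus ?thesis unfolding mat_trace_def by simp
qed

lemma orth_char: "(\<Sum>g\<in>carrier G. mat_trace (R g) * mat_trace (R (inv g))) = of_nat (card (carrier G))"
proof -
  have "(\<Sum>g\<in>carrier G. mat_trace (R g) * mat_trace (R (inv g)))
      = (\<Sum>g\<in>carrier G. \<Sum>i<n. \<Sum>k<n. R g $$ (i,i) * R (inv g) $$ (k,k))"
    by (intro sum.cong refl) (simp add: trR sum_product)
  also have "\<dots> = (\<Sum>i<n. \<Sum>k<n. \<Sum>g\<in>carrier G. R g $$ (i,i) * R (inv g) $$ (k,k))"
    by (simp add: sum.swap[of _ "carrier G"])
  also have "\<dots> = (\<Sum>i<n. \<Sum>k<n. if i = k then of_nat (card (carrier G)) / of_nat n else 0)"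
    by (intro sum.cong refl) (simp add: orth)
  also have "\<dots> = (\<Sum>i<n. of_nat (card (carrier G)) / of_nat n)"
    by (intro sum.cong refl) (simp add: sum.delta)
  also have "\<dots> = of_nat (card (carrier G))" using npos by simp
  finally show ?thesis .
qed

lemma norm_sum: "(\<Sum>g\<in>carrier G. (cmod (mat_trace (R g)))\<^sup>2) = real (card (carrier G))"
proof -
  have "complex_of_real (\<Sum>g\<in>carrier G. (cmod (mat_trace (R g)))\<^sup>2)
      = (\<Sum>g\<in>carrier G. complex_of_real ((cmod (mat_trace (R g)))\<^sup>2))" by (rule of_real_sum)
  also have "\<dots> = (\<Sum>g\<in>carrier G. mat_trace (R g) * cnj (mat_trace (R g)))"
    by (simp only: complex_norm_square)
  also have "\<dots> = (\<Sum>g\<in>carrier G. mat_trace (R g) * mat_trace (R (inv g)))"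
    by (intro sum.cong refl) (simp add: char_inv)
  also have "\<dots> = of_nat (card (carrier G))" by (rule orth_char)
  finally show ?thesis by (metis of_real_eq_iff of_real_of_nat_eq)
qed

end


lemma irr_firr: "group G \<Longrightarrow> finite (carrier G) \<Longrightarrow> is_irr_rep G n R \<Longrightarrow> firr G n R"
  unfolding firr_def frep_def frep_axioms_def firr_axioms_def is_irr_rep_def by blast

lemma irr_rep: "is_irr_rep G n R \<Longrightarrow> is_rep G n R"
  unfolding is_irr_rep_def by blast

lemma char_val: "g \<in> carrier G \<Longrightarrow> character_of G R g = mat_trace (R g)"
  unfolding character_of_def by simp

lemma char_one: "group G \<Longrightarrow> is_rep G n R \<Longrightarrow> character_of G R \<one>\<^bsub>G\<^esub> = of_nat n"
  by (simp add: char_val group.is_monoid monoid.one_closed rep_one)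

lemma irr_in_Irr: "is_irr_rep G n R \<Longrightarrow> character_of G R \<in> Irr G"
  unfolding Irr_def by blast

lemma mat_trace_smult: assumes "A \<in> carrier_mat n n" shows "mat_trace (k \<cdot>\<^sub>m A) = k * mat_trace A"
  unfolding mat_trace_def using assms by (simp add: sum_distrib_left)

lemma gvz_card: assumes grp: "group G" and fin: "finite (carrier G)" and gvz: "GVZ G"
  and irr: "is_irr_rep G n R"
  shows "card (char_center G (character_of G R)) * n^2 = card (carrier G)"
proof -
  interpret firr G n R using irr_firr[OF grp fin irr] .
  let ?\<chi> = "character_of G R"
  let ?Z = "char_center G ?\<chi>"
  have Zsub: "?Z \<subseteq> carrier G" unfolding char_center_def by blast
  have finZ: "finite ?Z" using finite_subset[OF Zsub fin] .
  have chi1: "?\<chi> \<one>\<^bsub>G\<^esub> = of_nat n" using char_one[OF grp rep] .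
  have "real (card (carrier G)) = (\<Sum>g\<in>carrier G. (cmod (mat_trace (R g)))\<^sup>2)"
    using norm_sum by simp
  also have "\<dots> = (\<Sum>g\<in>carrier G - ?Z. (cmod (mat_trace (R g)))\<^sup>2) + (\<Sum>g\<in>?Z. (cmod (mat_trace (R g)))\<^sup>2)"
    by (rule sum.subset_diff[OF Zsub fin])
  also have "(\<Sum>g\<in>carrier G - ?Z. (cmod (mat_trace (R g)))\<^sup>2) = 0"
  proof (rule sum.neutral, rule ballI)
    fix g assume g: "g \<in> carrier G - ?Z"
    have "?\<chi> g = 0" using gvz irr_in_Irr[OF irr] g unfolding GVZ_def by blast
    thus "(cmod (mat_trace (R g)))\<^sup>2 = 0" using g char_val[of g G R] by simp
  qed
  also have "(\<Sum>g\<in>?Z. (cmod (mat_trace (R g)))\<^sup>2) = (\<Sum>g\<in>?Z. (real n)\<^sup>2)"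
  proof (rule sum.cong[OF refl])
    fix g assume g: "g \<in> ?Z"
    hence "cmod (?\<chi> g) = cmod (?\<chi> \<one>\<^bsub>G\<^esub>)" unfolding char_center_def by blast
    hence "cmod (mat_trace (R g)) = real n" using chi1 char_val[of g G R] g Zsub by auto
    thus "(cmod (mat_trace (R g)))\<^sup>2 = (real n)\<^sup>2" by simp
  qed
  finally have "real (card (carrier G)) = real (card ?Z) * (real n)\<^sup>2" by simp
  thus ?thesis by (metis of_nat_eq_iff of_nat_mult of_nat_power)
qed

lemma scalar_center: assumes grp: "group G" and fin: "finite (carrier G)"
  and irr: "is_irr_rep G n R" and z: "z \<in> carrier G"
  and comm: "\<And>g. g \<in> carrier G \<Longrightarrow> R z * R g = R g * R z"
  shows "z \<in> char_center G (character_of G R)"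
proof -
  interpret firr G n R using irr_firr[OF grp fin irr] .
  have iz: "inv\<^bsub>G\<^esub> z \<in> carrier G" using z by simp
  have "\<exists>c. R z = c \<cdot>\<^sub>m 1\<^sub>m n" by (rule schur[OF irr Rc[OF z] comm])
  then obtain c where c: "R z = c \<cdot>\<^sub>m 1\<^sub>m n" ..
  have "1\<^sub>m n = R (inv\<^bsub>G\<^esub> z) * R z" using Rinv(1)[OF z] by simp
  also have "\<dots> = c \<cdot>\<^sub>m (R (inv\<^bsub>G\<^esub> z) * 1\<^sub>m n)" unfolding c by (rule mult_smult_distrib[OF Rc[OF iz] one_carrier_mat])
  also have "\<dots> = c \<cdot>\<^sub>m R (inv\<^bsub>G\<^esub> z)" using mone1[OF Rc[OF iz]] by simp
  finally have "mat_trace (1\<^sub>m n) = c * mat_trace (R (inv\<^bsub>G\<^esub> z))" using mat_trace_smult[OF Rc[OF iz]] by simp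
  hence e1: "of_nat n = c * cnj (mat_trace (R z))" using char_inv[OF z] by simp
  have e2: "mat_trace (R z) = c * of_nat n" unfolding c by (simp add: smult_one_trace)
  have "of_nat n = c * cnj c * of_nat n" using e1 unfolding e2 by simp
  hence cc: "c * cnj c = 1" using npos by simp
  have "cmod c = 1"
  proof -
    have "complex_of_real ((cmod c)\<^sup>2) = 1" using cc complex_norm_square[of c] by simp
    hence "(cmod c)\<^sup>2 = 1" by (metis of_real_eq_1_iff)
    thus ?thesis using norm_ge_zero[of c] by (auto simp: power2_eq_1_iff)
  qed
  hence "cmod (mat_trace (R z)) = cmod (of_nat n :: complex)"
    unfolding c by (simp add: smult_one_trace norm_mult)
  thus ?thesis unfolding char_center_def using z char_val[of z G R] char_one[OF grp rep] by simp
qed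

lemma ker_center: assumes grp: "group G" and rep: "is_rep G n R" and x: "x \<in> carrier G"
  and Rx: "R x = 1\<^sub>m n"
  shows "x \<in> char_center G (character_of G R)"
  unfolding char_center_def using x Rx char_val[of x G R] char_one[OF grp rep] by simp


lemma (in vec_space) basis_of_subset:
  fixes U :: "'a vec set"
  assumes U: "U \<subseteq> carrier_vec n"
  shows "\<exists>ws. set ws \<subseteq> U \<and> distinct ws \<and> length ws \<le> n \<and>
    (\<forall>x\<in>carrier_vec (length ws). mat_of_cols n ws *\<^sub>v x = 0\<^sub>v n \<longrightarrow> x = 0\<^sub>v (length ws)) \<and>
    (\<forall>u\<in>U. \<exists>x\<in>carrier_vec (length ws). u = mat_of_cols n ws *\<^sub>v x)"
proof -
  let ?P = "\<lambda>T. T \<subseteq> U \<and> lin_indpt T"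
  have bound: "finite A \<and> card A \<le> n" if "?P A" for A
  proof -
    have Ac: "A \<subseteq> carrier_vec n" using that U by blast
    have "finite A" using li_le_dim(1)[OF fin_dim] Ac that by simp
    moreover have "card A \<le> dim" using li_le_dim(2)[OF fin_dim] Ac that by simp
    ultimately show ?thesis using dim_is_n by simp
  qed
  have P0: "?P {}" unfolding lin_dep_def by auto
  obtain T where T: "finite T" "maximal T ?P" using maximal_exists[of ?P n "{}", OF bound P0] by blast
  obtain ws where ws: "set ws = T" "distinct ws" using finite_distinct_list[OF T(1)] by blast
  have TU: "T \<subseteq> U" "lin_indpt T" using T(2) unfolding maximal_def by auto
  have wsc: "set ws \<subseteq> carrier_vec n" using TU U ws by auto
  let ?B = "mat_of_cols n ws"
  have Bc: "?B \<in> carrier_mat n (length ws)" by simp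
  have colsB: "cols ?B = ws" using cols_mat_of_cols[OF wsc] .
  have len: "length ws \<le> n" using bound[of T] TU ws distinct_card[OF ws(2)] by simp
  have inj: "\<forall>x\<in>carrier_vec (length ws). ?B *\<^sub>v x = 0\<^sub>v n \<longrightarrow> x = 0\<^sub>v (length ws)"
  proof (intro ballI impI, rule ccontr)
    fix x assume x: "x \<in> carrier_vec (length ws)" and Bx: "?B *\<^sub>v x = 0\<^sub>v n" and nz: "x \<noteq> 0\<^sub>v (length ws)"
    have "lin_dep (set (cols ?B))" using lin_depI[OF Bc x nz Bx] colsB ws(2) by simp
    thus False using TU ws colsB by simp
  qed
  have spn: "\<forall>u\<in>U. \<exists>x\<in>carrier_vec (length ws). u = ?B *\<^sub>v x"
  proof
    fix u assume u: "u \<in> U"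
    have uc: "u \<in> carrier_vec n" using u U by blast
    have Tc: "T \<subseteq> carrier_vec n" using TU U by blast
    have "u \<in> span T"
    proof (cases "u \<in> T")
      case True
      then show ?thesis using in_own_span[OF Tc] by blast
    next
      case False
      have "\<not> ?P (T \<union> {u})"
      proof
        assume "?P (T \<union> {u})"
        hence "T \<union> {u} = T" using T(2) unfolding maximal_def by blast
        thus False using False by blast
      qed
      hence "lin_dep (T \<union> {u})" using TU u by blast
      thus ?thesis using lin_dep_iff_in_span[OF Tc TU(2) uc False] by simp
    qed
    hence "u \<in> span_list ws" using span_list_as_span[OF wsc] ws(1) by simp
    then obtain c where c: "u = lincomb_list c ws" unfolding span_list_def by blast
    have "lincomb_list c ws = ?B *\<^sub>v vec (length ws) c"
    proof (rule lincomb_list_as_mat_mult, rule ballI)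
      fix w assume "w \<in> set ws"
      hence "w \<in> carrier_vec n" using wsc by blast
      thus "dim_vec w = n" by (rule carrier_vecD)
    qed
    hence "u = ?B *\<^sub>v vec (length ws) c" using c by simp
    moreover have "vec (length ws) c \<in> carrier_vec (length ws)" by simp
    ultimately show "\<exists>x\<in>carrier_vec (length ws). u = ?B *\<^sub>v x" by blast
  qed
  have "set ws \<subseteq> U" using ws(1) TU(1) by simp
  thus ?thesis using ws(2) len inj spn by (intro exI[of _ ws] conjI)
qed


lemma moc_cons: fixes w :: "complex vec" assumes w: "w \<in> carrier_vec k" and ws: "set ws \<subseteq> carrier_vec k"
  and x: "x \<in> carrier_vec (Suc (length ws))"
  shows "mat_of_cols k (w # ws) *\<^sub>v x = x $ 0 \<cdot>\<^sub>v w + mat_of_cols k ws *\<^sub>v vec (length ws) (\<lambda>i. x $ Suc i)"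
proof (rule eq_vecI)
  fix i assume "i < dim_vec (x $ 0 \<cdot>\<^sub>v w + mat_of_cols k ws *\<^sub>v vec (length ws) (\<lambda>i. x $ Suc i))"
  hence i: "i < k" by simp
  have c1: "mat_of_cols k (w # ws) \<in> carrier_mat k (Suc (length ws))" using mat_of_cols_carrier(1)[of k "w # ws"] by simp
  have c2: "mat_of_cols k ws \<in> carrier_mat k (length ws)" by simp
  have "(mat_of_cols k (w # ws) *\<^sub>v x) $ i = (\<Sum>j<Suc (length ws). mat_of_cols k (w # ws) $$ (i,j) * x $ j)"
    by (rule mult_vec_index[OF c1 x i])
  also have "\<dots> = mat_of_cols k (w # ws) $$ (i,0) * x $ 0 + (\<Sum>j<length ws. mat_of_cols k (w # ws) $$ (i,Suc j) * x $ Suc j)"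
    by (rule sum.lessThan_Suc_shift)
  also have "\<dots> = w $ i * x $ 0 + (\<Sum>j<length ws. mat_of_cols k ws $$ (i,j) * x $ Suc j)"
    using i by (simp add: mat_of_cols_index)
  also have "(\<Sum>j<length ws. mat_of_cols k ws $$ (i,j) * x $ Suc j) = (mat_of_cols k ws *\<^sub>v vec (length ws) (\<lambda>i. x $ Suc i)) $ i"
    using mult_vec_index[OF c2 _ i, of "vec (length ws) (\<lambda>i. x $ Suc i)"] by simp
  finally show "(mat_of_cols k (w # ws) *\<^sub>v x) $ i = (x $ 0 \<cdot>\<^sub>v w + mat_of_cols k ws *\<^sub>v vec (length ws) (\<lambda>i. x $ Suc i)) $ i"
    using i w by (simp add: mult.commute[of "w $ i"])
qed (use w in simp_all)

lemma range_in_subspace: assumes U: "is_subspace k U"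
  shows "set ws \<subseteq> U \<Longrightarrow> x \<in> carrier_vec (length ws) \<Longrightarrow> mat_of_cols k ws *\<^sub>v x \<in> U"
proof (induction ws arbitrary: x)
  case Nil
  have "mat_of_cols k [] *\<^sub>v x = 0\<^sub>v k" using Nil.prems by (intro eq_vecI) (simp_all add: scalar_prod_def)
  thus ?case using U unfolding is_subspace_def by simp
next
  case (Cons w ws)
  have Uc: "U \<subseteq> carrier_vec k" using U unfolding is_subspace_def by blast
  have w: "w \<in> U" and ws: "set ws \<subseteq> U" using Cons.prems by auto
  have wc: "w \<in> carrier_vec k" using w Uc by blast
  have wsc: "set ws \<subseteq> carrier_vec k" using ws Uc by blast
  have x: "x \<in> carrier_vec (Suc (length ws))" using Cons.prems by simp
  have "mat_of_cols k ws *\<^sub>v vec (length ws) (\<lambda>i. x $ Suc i) \<in> U"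
    using Cons.IH[OF ws] by simp
  moreover have "x $ 0 \<cdot>\<^sub>v w \<in> U" using w U unfolding is_subspace_def by blast
  ultimately have "x $ 0 \<cdot>\<^sub>v w + mat_of_cols k ws *\<^sub>v vec (length ws) (\<lambda>i. x $ Suc i) \<in> U"
    using U unfolding is_subspace_def by blast
  thus ?case using moc_cons[OF wc wsc x] by simp
qed

lemma mat_cols_eq: assumes "A \<in> carrier_mat n m" "B \<in> carrier_mat n m"
  and "\<And>j. j < m \<Longrightarrow> col A j = col B j"
  shows "A = B"
proof (rule eq_matI)
  fix i j assume i: "i < dim_row B" and j: "j < dim_col B"
  have "col A j $ i = col B j $ i" using assms(3) j assms(2) by simp
  thus "A $$ (i, j) = B $$ (i, j)" using i j assms(1,2) by simp
qed (use assms in simp_all)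

lemma inj_cancel: fixes B :: "complex mat"
  assumes B: "B \<in> carrier_mat n m"
  and inj: "\<forall>x\<in>carrier_vec m. B *\<^sub>v x = 0\<^sub>v n \<longrightarrow> x = 0\<^sub>v m"
  and x: "x \<in> carrier_vec m" and y: "y \<in> carrier_vec m" and eq: "B *\<^sub>v x = B *\<^sub>v y"
  shows "x = y"
proof -
  have "B *\<^sub>v (x - y) = B *\<^sub>v x - B *\<^sub>v y" by (rule mult_minus_distrib_mat_vec[OF B x y])
  also have "\<dots> = 0\<^sub>v n" using eq B y by simp
  finally have "x - y = 0\<^sub>v m" using inj x y by simp
  show ?thesis
  proof (rule eq_vecI)
    fix i assume i: "i < dim_vec y"
    have "(x - y) $ i = 0" using \<open>x - y = 0\<^sub>v m\<close> i y by simp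
    thus "x $ i = y $ i" using i by simp
  qed (use x y in simp)
qed

lemma inj_cancel_mat: fixes B :: "complex mat"
  assumes B: "B \<in> carrier_mat n m"
  and inj: "\<forall>x\<in>carrier_vec m. B *\<^sub>v x = 0\<^sub>v n \<longrightarrow> x = 0\<^sub>v m"
  and X: "X \<in> carrier_mat m p" and Y: "Y \<in> carrier_mat m p" and eq: "B * X = B * Y"
  shows "X = Y"
proof (rule mat_cols_eq[OF X Y])
  fix j assume j: "j < p"
  have "B *\<^sub>v col X j = col (B * X) j" using col_mult2[OF B X j] by simp
  also have "\<dots> = col (B * Y) j" using eq by simp
  also have "\<dots> = B *\<^sub>v col Y j" using col_mult2[OF B Y j] by simp
  finally show "col X j = col Y j" using inj_cancel[OF B inj] X Y j by simp
qed


context frep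
begin

lemma subrep:
  assumes U: "is_subspace n U" and Uinv: "\<And>g u. g \<in> carrier G \<Longrightarrow> u \<in> U \<Longrightarrow> R g *\<^sub>v u \<in> U"
    and U0: "U \<noteq> {0\<^sub>v n}" and Uall: "U \<noteq> carrier_vec n"
  shows "\<exists>m S. 0 < m \<and> m < n \<and> is_rep G m S \<and> (\<forall>g\<in>carrier G. R g = 1\<^sub>m n \<longrightarrow> S g = 1\<^sub>m m) \<and>
        ((\<forall>g\<in>carrier G. \<forall>h\<in>carrier G. S g * S h = S h * S g) \<longrightarrow>
           (\<forall>g\<in>carrier G. \<forall>h\<in>carrier G. \<forall>u\<in>U. R g *\<^sub>v (R h *\<^sub>v u) = R h *\<^sub>v (R g *\<^sub>v u)))"
proof -
  have Uc: "U \<subseteq> carrier_vec n" using U unfolding is_subspace_def by blast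
  have U0in: "0\<^sub>v n \<in> U" using U unfolding is_subspace_def by blast
  interpret vs: vec_space "TYPE(complex)" n .
  obtain ws where ws: "set ws \<subseteq> U" "distinct ws" "length ws \<le> n"
     and inj0: "\<forall>x\<in>carrier_vec (length ws). mat_of_cols n ws *\<^sub>v x = 0\<^sub>v n \<longrightarrow> x = 0\<^sub>v (length ws)"
     and spn0: "\<forall>u\<in>U. \<exists>x\<in>carrier_vec (length ws). u = mat_of_cols n ws *\<^sub>v x"
    using vs.basis_of_subset[OF Uc] by blast
  define m where "m = length ws"
  define B where "B = mat_of_cols n ws"
  have Bc: "B \<in> carrier_mat n m" unfolding B_def m_def by simp
  have inj: "\<forall>x\<in>carrier_vec m. B *\<^sub>v x = 0\<^sub>v n \<longrightarrow> x = 0\<^sub>v m" using inj0 unfolding B_def m_def .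
  have spn: "\<forall>u\<in>U. \<exists>x\<in>carrier_vec m. u = B *\<^sub>v x" using spn0 unfolding B_def m_def .
  have rng: "\<And>x. x \<in> carrier_vec m \<Longrightarrow> B *\<^sub>v x \<in> U"
    unfolding B_def m_def using range_in_subspace[OF U ws(1)] by blast
  have mpos: "0 < m"
  proof (rule ccontr)
    assume "\<not> 0 < m"
    hence m0: "m = 0" by simp
    have "U \<subseteq> {0\<^sub>v n}"
    proof
      fix u assume u: "u \<in> U"
      then obtain x where x: "x \<in> carrier_vec m" "u = B *\<^sub>v x" using spn by blast
      have "B *\<^sub>v x = 0\<^sub>v n" using x Bc m0 by (intro eq_vecI) (simp_all add: scalar_prod_def)
      thus "u \<in> {0\<^sub>v n}" using x by simp
    qed
    thus False using U0 U0in by blast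
  qed
  have mless: "m < n"
  proof (rule ccontr)
    assume "\<not> m < n"
    hence mn: "m = n" using ws(3) unfolding m_def by simp
    have Bc': "B \<in> carrier_mat n n" using Bc mn by simp
    obtain Bi where Bi: "Bi \<in> carrier_mat n n" "B * Bi = 1\<^sub>m n"
      using inverse_exists[OF Bc'] inj mn by auto
    have "carrier_vec n \<subseteq> U"
    proof
      fix v :: "complex vec" assume v: "v \<in> carrier_vec n"
      have "B *\<^sub>v (Bi *\<^sub>v v) = (B * Bi) *\<^sub>v v" using assoc_mult_mat_vec[OF Bc' Bi(1) v] by simp
      also have "\<dots> = v" using Bi(2) v by simp
      finally show "v \<in> U" using rng[of "Bi *\<^sub>v v"] Bi(1) v mn by simp
    qed
    thus False using Uc Uall by blast
  qed
  have colB: "\<And>j. j < m \<Longrightarrow> col B j \<in> U"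
  proof -
    fix j assume j: "j < m"
    have "ws ! j \<in> U" using ws(1) j unfolding m_def by auto
    moreover have "col B j = ws ! j" unfolding B_def using j Uc \<open>ws ! j \<in> U\<close> unfolding m_def
      by (intro col_mat_of_cols) auto
    ultimately show "col B j \<in> U" by simp
  qed
  have ex: "\<exists>M. M \<in> carrier_mat m m \<and> R g * B = B * M" if g: "g \<in> carrier G" for g
  proof -
    have "\<forall>j\<in>{..<m}. \<exists>x. x \<in> carrier_vec m \<and> R g *\<^sub>v col B j = B *\<^sub>v x"
      using spn Uinv[OF g colB] by blast
    then obtain f where f: "\<forall>j\<in>{..<m}. f j \<in> carrier_vec m \<and> R g *\<^sub>v col B j = B *\<^sub>v f j"
      by (metis bchoice)
    define M where "M = mat_of_cols m (map f [0..<m])"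
    have Mc: "M \<in> carrier_mat m m" unfolding M_def using mat_of_cols_carrier(1)[of m "map f [0..<m]"] by simp
    have colM: "col M j = f j" if j: "j < m" for j
    proof -
      have "col (mat_of_cols m (map f [0..<m])) j = map f [0..<m] ! j"
        by (rule col_mat_of_cols) (use j f in auto)
      thus ?thesis unfolding M_def using j by simp
    qed
    have "R g * B = B * M"
    proof (rule mat_cols_eq[OF mult_carrier_mat[OF Rc[OF g] Bc] mult_carrier_mat[OF Bc Mc]])
      fix j assume j: "j < m"
      have "col (R g * B) j = R g *\<^sub>v col B j" using col_mult2[OF Rc[OF g] Bc j] by simp
      also have "\<dots> = B *\<^sub>v f j" using f j by simp
      also have "\<dots> = col (B * M) j" using col_mult2[OF Bc Mc j] colM[OF j] by simp
      finally show "col (R g * B) j = col (B * M) j" .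
    qed
    thus ?thesis using Mc by blast
  qed
  define S where "S g = (SOME M. M \<in> carrier_mat m m \<and> R g * B = B * M)" for g
  have SB: "S g \<in> carrier_mat m m" "R g * B = B * S g" if g: "g \<in> carrier G" for g
    using someI_ex[OF ex[OF g]] unfolding S_def by blast+
  have cancel: "X = Y" if "X \<in> carrier_mat m m" "Y \<in> carrier_mat m m" "B * X = B * Y" for X Y
    using inj_cancel_mat[OF Bc inj that] .
  have K: "R g * (R h * B) = B * (S g * S h)" if g: "g \<in> carrier G" and h: "h \<in> carrier G" for g h
  proof -
    have "R g * (R h * B) = R g * (B * S h)" using SB(2)[OF h] by simp
    also have "\<dots> = (R g * B) * S h" by (rule assoc_mult_mat[OF Rc[OF g] Bc SB(1)[OF h], symmetric])
    also have "\<dots> = (B * S g) * S h" using SB(2)[OF g] by simp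
    also have "\<dots> = B * (S g * S h)" by (rule assoc_mult_mat[OF Bc SB(1)[OF g] SB(1)[OF h]])
    finally show ?thesis .
  qed
  have Smult: "S (g \<otimes> h) = S g * S h" if g: "g \<in> carrier G" and h: "h \<in> carrier G" for g h
  proof (rule cancel)
    show "S (g \<otimes> h) \<in> carrier_mat m m" using SB(1) g h by simp
    show "S g * S h \<in> carrier_mat m m" using SB(1)[OF g] SB(1)[OF h] by (rule mult_carrier_mat)
    have "B * S (g \<otimes> h) = R (g \<otimes> h) * B" using SB(2) g h by simp
    also have "\<dots> = (R g * R h) * B" using Rm[OF g h] by simp
    also have "\<dots> = R g * (R h * B)" by (rule assoc_mult_mat[OF Rc[OF g] Rc[OF h] Bc])
    also have "\<dots> = B * (S g * S h)" by (rule K[OF g h])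
    finally show "B * S (g \<otimes> h) = B * (S g * S h)" .
  qed
  have S1: "S \<one> = 1\<^sub>m m"
  proof (rule cancel)
    show "S \<one> \<in> carrier_mat m m" using SB(1) by simp
    show "1\<^sub>m m \<in> carrier_mat m m" by simp
    have "B * S \<one> = R \<one> * B" using SB(2)[OF one_closed] by simp
    also have "\<dots> = B" using Bc by simp
    also have "\<dots> = B * 1\<^sub>m m" using Bc by simp
    finally show "B * S \<one> = B * 1\<^sub>m m" .
  qed
  have repS: "is_rep G m S"
    unfolding is_rep_def using mpos SB(1) S1 Smult by blast
  have triv: "\<forall>g\<in>carrier G. R g = 1\<^sub>m n \<longrightarrow> S g = 1\<^sub>m m"
  proof (intro ballI impI)
    fix g assume g: "g \<in> carrier G" and Rg: "R g = 1\<^sub>m n"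
    show "S g = 1\<^sub>m m"
    proof (rule cancel)
      show "S g \<in> carrier_mat m m" using SB(1)[OF g] .
      show "1\<^sub>m m \<in> carrier_mat m m" by simp
      have "B * S g = R g * B" using SB(2)[OF g] by simp
      also have "\<dots> = B" using Bc Rg by simp
      also have "\<dots> = B * 1\<^sub>m m" using Bc by simp
      finally show "B * S g = B * 1\<^sub>m m" .
    qed
  qed
  have comm: "\<forall>g\<in>carrier G. \<forall>h\<in>carrier G. \<forall>u\<in>U. R g *\<^sub>v (R h *\<^sub>v u) = R h *\<^sub>v (R g *\<^sub>v u)"
    if Sc: "\<forall>g\<in>carrier G. \<forall>h\<in>carrier G. S g * S h = S h * S g"
  proof (intro ballI)
    fix g h u assume g: "g \<in> carrier G" and h: "h \<in> carrier G" and u: "u \<in> U"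
    obtain x where x: "x \<in> carrier_vec m" "u = B *\<^sub>v x" using spn u by blast
    have vec_eq: "R a *\<^sub>v (R b *\<^sub>v u) = (B * (S a * S b)) *\<^sub>v x" if a: "a \<in> carrier G" and b: "b \<in> carrier G" for a b
    proof -
      have "R a *\<^sub>v (R b *\<^sub>v u) = R a *\<^sub>v ((R b * B) *\<^sub>v x)"
        using x assoc_mult_mat_vec[OF Rc[OF b] Bc x(1)] by simp
      also have "\<dots> = (R a * (R b * B)) *\<^sub>v x"
        using assoc_mult_mat_vec[OF Rc[OF a] mult_carrier_mat[OF Rc[OF b] Bc] x(1)] by simp
      also have "\<dots> = (B * (S a * S b)) *\<^sub>v x" using K[OF a b] by simp
      finally show ?thesis .
    qed
    show "R g *\<^sub>v (R h *\<^sub>v u) = R h *\<^sub>v (R g *\<^sub>v u)"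
      using vec_eq[OF g h] vec_eq[OF h g] Sc g h by simp
  qed
  show ?thesis using mpos mless repS triv comm by blast
qed

end


lemma basis_mat: assumes U: "is_subspace n U"
  shows "\<exists>m B. B \<in> carrier_mat n m \<and> m \<le> n \<and> (\<forall>x\<in>carrier_vec m. B *\<^sub>v x = 0\<^sub>v n \<longrightarrow> x = 0\<^sub>v m)
     \<and> (\<forall>u\<in>U. \<exists>x\<in>carrier_vec m. u = B *\<^sub>v x) \<and> (\<forall>x\<in>carrier_vec m. B *\<^sub>v x \<in> U)"
proof -
  have Uc: "U \<subseteq> carrier_vec n" using U unfolding is_subspace_def by blast
  interpret vs: vec_space "TYPE(complex)" n .
  obtain ws where ws: "set ws \<subseteq> U" "distinct ws" "length ws \<le> n"
     and inj0: "\<forall>x\<in>carrier_vec (length ws). mat_of_cols n ws *\<^sub>v x = 0\<^sub>v n \<longrightarrow> x = 0\<^sub>v (length ws)"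
     and spn0: "\<forall>u\<in>U. \<exists>x\<in>carrier_vec (length ws). u = mat_of_cols n ws *\<^sub>v x"
    using vs.basis_of_subset[OF Uc] by blast
  have rng: "\<forall>x\<in>carrier_vec (length ws). mat_of_cols n ws *\<^sub>v x \<in> U"
    using range_in_subspace[OF U ws(1)] by blast
  have "mat_of_cols n ws \<in> carrier_mat n (length ws)" by simp
  thus ?thesis using ws(3) inj0 spn0 rng by blast
qed

lemma vec_decomp: "v \<in> carrier_vec n \<Longrightarrow> u \<in> carrier_vec n \<Longrightarrow> v = u + (v - u)" for v u :: "complex vec"
  by (intro eq_vecI) simp_all

context frep
begin

lemma complement:
  assumes U: "is_subspace n U" and Uinv: "\<And>g u. g \<in> carrier G \<Longrightarrow> u \<in> U \<Longrightarrow> R g *\<^sub>v u \<in> U"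
    and U0: "U \<noteq> {0\<^sub>v n}" and Uall: "U \<noteq> carrier_vec n"
  shows "\<exists>U'. is_subspace n U' \<and> (\<forall>g\<in>carrier G. \<forall>u\<in>U'. R g *\<^sub>v u \<in> U') \<and> U' \<noteq> {0\<^sub>v n}
     \<and> U' \<noteq> carrier_vec n \<and> (\<forall>v\<in>carrier_vec n. \<exists>u\<in>U. \<exists>u'\<in>U'. v = u + u')"
proof -
  have Uc: "U \<subseteq> carrier_vec n" using U unfolding is_subspace_def by blast
  have U0in: "0\<^sub>v n \<in> U" using U unfolding is_subspace_def by blast
  obtain m B where Bc: "B \<in> carrier_mat n m" and inj: "\<forall>x\<in>carrier_vec m. B *\<^sub>v x = 0\<^sub>v n \<longrightarrow> x = 0\<^sub>v m"
    and spn: "\<forall>u\<in>U. \<exists>x\<in>carrier_vec m. u = B *\<^sub>v x" and rng: "\<forall>x\<in>carrier_vec m. B *\<^sub>v x \<in> U"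
    using basis_mat[OF U] by blast
  have aBc: "adj B \<in> carrier_mat m n" using Bc by (rule adj_carrier)
  define M where "M = adj B * P * B"
  have Mc: "M \<in> carrier_mat m m" unfolding M_def
    by (rule mult_carrier_mat[OF mult_carrier_mat[OF aBc P_carrier] Bc])
  have Mv: "M *\<^sub>v x = adj B *\<^sub>v (P *\<^sub>v (B *\<^sub>v x))" if x: "x \<in> carrier_vec m" for x
  proof -
    have "M *\<^sub>v x = (adj B * P) *\<^sub>v (B *\<^sub>v x)" unfolding M_def
      by (rule assoc_mult_mat_vec[OF mult_carrier_mat[OF aBc P_carrier] Bc x])
    also have "\<dots> = adj B *\<^sub>v (P *\<^sub>v (B *\<^sub>v x))"
      by (rule assoc_mult_mat_vec[OF aBc P_carrier mult_mat_vec_carrier[OF Bc x]])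
    finally show ?thesis .
  qed
  have adjB: "conjugate z \<bullet> (adj B *\<^sub>v w) = conjugate (B *\<^sub>v z) \<bullet> w"
    if z: "z \<in> carrier_vec m" and w: "w \<in> carrier_vec n" for z w
    using sprod_adj[OF aBc z w] by simp
  have Mker: "x = 0\<^sub>v m" if x: "x \<in> carrier_vec m" and Mx: "M *\<^sub>v x = 0\<^sub>v m" for x
  proof -
    have Bx: "B *\<^sub>v x \<in> carrier_vec n" using Bc x by simp
    have "conjugate (B *\<^sub>v x) \<bullet> (P *\<^sub>v (B *\<^sub>v x)) = conjugate x \<bullet> (M *\<^sub>v x)"
      using adjB[OF x Pvc[OF Bx]] Mv[OF x] by simp
    also have "\<dots> = 0" using Mx x by simp
    finally have "B *\<^sub>v x = 0\<^sub>v n" using P_pos[OF Bx] by simp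
    thus ?thesis using inj x by blast
  qed
  obtain Mi where Mi: "Mi \<in> carrier_mat m m" "M * Mi = 1\<^sub>m m"
    using inverse_exists[OF Mc Mker] by blast
  define U' where "U' = {v \<in> carrier_vec n. \<forall>u\<in>U. conjugate u \<bullet> (P *\<^sub>v v) = 0}"
  have decomp: "\<exists>u\<in>U. \<exists>u'\<in>U'. v = u + u'" if v: "v \<in> carrier_vec n" for v
  proof -
    define w where "w = adj B *\<^sub>v (P *\<^sub>v v)"
    have wc: "w \<in> carrier_vec m" unfolding w_def using aBc v by simp
    define y where "y = Mi *\<^sub>v w"
    have yc: "y \<in> carrier_vec m" unfolding y_def using Mi(1) wc by simp
    define u where "u = B *\<^sub>v y"
    have uc: "u \<in> carrier_vec n" unfolding u_def using Bc yc by simp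
    have uU: "u \<in> U" unfolding u_def using rng yc by blast
    have My: "M *\<^sub>v y = w" unfolding y_def
      using assoc_mult_mat_vec[OF Mc Mi(1) wc] Mi(2) wc by simp
    have key: "adj B *\<^sub>v (P *\<^sub>v (v - u)) = 0\<^sub>v m"
    proof -
      have "P *\<^sub>v (v - u) = P *\<^sub>v v - P *\<^sub>v u" by (rule mult_minus_distrib_mat_vec[OF P_carrier v uc])
      hence "adj B *\<^sub>v (P *\<^sub>v (v - u)) = adj B *\<^sub>v (P *\<^sub>v v) - adj B *\<^sub>v (P *\<^sub>v u)"
        using mult_minus_distrib_mat_vec[OF aBc Pvc[OF v] Pvc[OF uc]] by simp
      also have "adj B *\<^sub>v (P *\<^sub>v u) = w" using Mv[OF yc] My unfolding u_def by simp
      finally show ?thesis using wc unfolding w_def by simp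
    qed
    have "v - u \<in> U'"
      unfolding U'_def
    proof (intro CollectI conjI ballI)
      show "v - u \<in> carrier_vec n" using v uc by simp
      fix u0 assume u0: "u0 \<in> U"
      then obtain z where z: "z \<in> carrier_vec m" "u0 = B *\<^sub>v z" using spn by blast
      have vu: "P *\<^sub>v (v - u) \<in> carrier_vec n" using v uc by simp
      have "conjugate u0 \<bullet> (P *\<^sub>v (v - u)) = conjugate z \<bullet> (adj B *\<^sub>v (P *\<^sub>v (v - u)))"
        using adjB[OF z(1) vu] z(2) by simp
      also have "\<dots> = 0" using key z(1) by simp
      finally show "conjugate u0 \<bullet> (P *\<^sub>v (v - u)) = 0" .
    qed
    moreover have "v = u + (v - u)" by (rule vec_decomp[OF v uc])
    ultimately show ?thesis using uU by blast
  qed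
  have sub: "is_subspace n U'"
    unfolding is_subspace_def
  proof (intro conjI ballI allI)
    show "U' \<subseteq> carrier_vec n" unfolding U'_def by blast
    have P0: "P *\<^sub>v 0\<^sub>v n = 0\<^sub>v n"
    proof (rule eq_vecI)
      fix i assume "i < dim_vec (0\<^sub>v n :: complex vec)"
      hence i: "i < n" by simp
      show "(P *\<^sub>v 0\<^sub>v n) $ i = 0\<^sub>v n $ i" using mult_vec_index[OF P_carrier zero_carrier_vec i] i by simp
    qed (simp add: Pm_def)
    show "0\<^sub>v n \<in> U'" unfolding U'_def
    proof (intro CollectI conjI ballI)
      show "0\<^sub>v n \<in> carrier_vec n" by simp
      fix u assume "u \<in> U"
      hence uc: "u \<in> carrier_vec n" using Uc by blast
      show "conjugate u \<bullet> (P *\<^sub>v 0\<^sub>v n) = 0" unfolding P0 using uc by simp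
    qed
  next
    fix v w assume v: "v \<in> U'" and w: "w \<in> U'"
    have vc: "v \<in> carrier_vec n" and wc: "w \<in> carrier_vec n" using v w unfolding U'_def by auto
    show "v + w \<in> U'" unfolding U'_def
    proof (intro CollectI conjI ballI)
      show "v + w \<in> carrier_vec n" using vc wc by simp
      fix u assume u: "u \<in> U"
      have uc: "u \<in> carrier_vec n" using u Uc by blast
      have "conjugate u \<bullet> (P *\<^sub>v (v + w)) = conjugate u \<bullet> (P *\<^sub>v v + P *\<^sub>v w)"
        using mult_add_distrib_mat_vec[OF P_carrier vc wc] by simp
      also have "\<dots> = conjugate u \<bullet> (P *\<^sub>v v) + conjugate u \<bullet> (P *\<^sub>v w)"
        by (rule scalar_prod_add_distrib[OF carrier_vec_conjugate[OF uc] Pvc[OF vc] Pvc[OF wc]])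
      also have "\<dots> = 0" using u v w unfolding U'_def by simp
      finally show "conjugate u \<bullet> (P *\<^sub>v (v + w)) = 0" .
    qed
  next
    fix c v assume v: "v \<in> U'"
    have vc: "v \<in> carrier_vec n" using v unfolding U'_def by auto
    show "c \<cdot>\<^sub>v v \<in> U'" unfolding U'_def
    proof (intro CollectI conjI ballI)
      show "c \<cdot>\<^sub>v v \<in> carrier_vec n" using vc by simp
      fix u assume u: "u \<in> U"
      have uc: "u \<in> carrier_vec n" using u Uc by blast
      have "conjugate u \<bullet> (P *\<^sub>v (c \<cdot>\<^sub>v v)) = conjugate u \<bullet> (c \<cdot>\<^sub>v (P *\<^sub>v v))"
        using mult_mat_vec[OF P_carrier vc] by simp
      also have "\<dots> = c * (conjugate u \<bullet> (P *\<^sub>v v))"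
        using uc vc by (intro scalar_prod_smult_right) simp
      also have "\<dots> = 0" using u v unfolding U'_def by simp
      finally show "conjugate u \<bullet> (P *\<^sub>v (c \<cdot>\<^sub>v v)) = 0" .
    qed
  qed
  have inv': "\<forall>g\<in>carrier G. \<forall>v\<in>U'. R g *\<^sub>v v \<in> U'"
  proof (intro ballI)
    fix g v assume g: "g \<in> carrier G" and v: "v \<in> U'"
    have vc: "v \<in> carrier_vec n" using v unfolding U'_def by auto
    have ig: "inv g \<in> carrier G" using g by simp
    show "R g *\<^sub>v v \<in> U'" unfolding U'_def
    proof (intro CollectI conjI ballI)
      show "R g *\<^sub>v v \<in> carrier_vec n" using g vc by simp
      fix u assume u: "u \<in> U"
      have uc: "u \<in> carrier_vec n" using u Uc by blast
      have "P *\<^sub>v (R g *\<^sub>v v) = (P * R g) *\<^sub>v v"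
        using assoc_mult_mat_vec[OF P_carrier Rc[OF g] vc] by simp
      also have "\<dots> = (adj (R (inv g)) * P) *\<^sub>v v" using P_comm[OF g] by simp
      also have "\<dots> = adj (R (inv g)) *\<^sub>v (P *\<^sub>v v)"
        by (rule assoc_mult_mat_vec[OF adjRc[OF ig] P_carrier vc])
      finally have "conjugate u \<bullet> (P *\<^sub>v (R g *\<^sub>v v)) = conjugate u \<bullet> (adj (R (inv g)) *\<^sub>v (P *\<^sub>v v))"
        by simp
      also have "\<dots> = conjugate (R (inv g) *\<^sub>v u) \<bullet> (P *\<^sub>v v)"
        using sprod_adj[OF adjRc[OF ig] uc Pvc[OF vc]] by simp
      also have "\<dots> = 0" using v Uinv[OF ig u] unfolding U'_def by simp
      finally show "conjugate u \<bullet> (P *\<^sub>v (R g *\<^sub>v v)) = 0" .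
    qed
  qed
  obtain u0 where u0: "u0 \<in> U" "u0 \<noteq> 0\<^sub>v n" using U0 U0in by blast
  have u0c: "u0 \<in> carrier_vec n" using u0 Uc by blast
  have notall: "U' \<noteq> carrier_vec n"
  proof
    assume "U' = carrier_vec n"
    hence "u0 \<in> U'" using u0c by simp
    hence "conjugate u0 \<bullet> (P *\<^sub>v u0) = 0" using u0 unfolding U'_def by blast
    thus False using P_pos[OF u0c] u0(2) by simp
  qed
  obtain v0 where v0: "v0 \<in> carrier_vec n" "v0 \<notin> U" using Uall Uc by blast
  obtain u u' where uu: "u \<in> U" "u' \<in> U'" "v0 = u + u'" using decomp[OF v0(1)] by blast
  have notzero: "U' \<noteq> {0\<^sub>v n}"
  proof
    assume "U' = {0\<^sub>v n}"
    hence "u' = 0\<^sub>v n" using uu by simp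
    moreover have "u \<in> carrier_vec n" using uu(1) Uc by blast
    ultimately have "v0 = u" using uu(3) by simp
    thus False using v0 uu by simp
  qed
  show ?thesis using sub inv' notzero notall decomp by blast
qed

end


lemma frepI: "group G \<Longrightarrow> finite (carrier G) \<Longrightarrow> is_rep G n R \<Longrightarrow> frep G n R"
  unfolding frep_def frep_axioms_def by blast

lemma comm_on_sum:
  fixes A B :: "complex mat"
  assumes A: "A \<in> carrier_mat n n" and B: "B \<in> carrier_mat n n"
  and W: "\<And>w. w \<in> W \<Longrightarrow> A *\<^sub>v (B *\<^sub>v w) = B *\<^sub>v (A *\<^sub>v w)"
  and W': "\<And>w. w \<in> W' \<Longrightarrow> A *\<^sub>v (B *\<^sub>v w) = B *\<^sub>v (A *\<^sub>v w)"
  and Wc: "W \<subseteq> carrier_vec n" and W'c: "W' \<subseteq> carrier_vec n"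
  and dec: "\<And>v. v \<in> carrier_vec n \<Longrightarrow> \<exists>w\<in>W. \<exists>w'\<in>W'. v = w + w'"
  shows "A * B = B * A"
proof (rule mat_eq_by_vec[OF mult_carrier_mat[OF A B] mult_carrier_mat[OF B A]])
  fix v :: "complex vec" assume v: "v \<in> carrier_vec n"
  obtain w w' where ww: "w \<in> W" "w' \<in> W'" "v = w + w'" using dec[OF v] by blast
  have wc: "w \<in> carrier_vec n" and w'c: "w' \<in> carrier_vec n" using ww Wc W'c by blast+
  have e: "(X * Y) *\<^sub>v v = X *\<^sub>v (Y *\<^sub>v w) + X *\<^sub>v (Y *\<^sub>v w')"
    if X: "X \<in> carrier_mat n n" and Y: "Y \<in> carrier_mat n n" for X Y :: "complex mat"
  proof -
    have "(X * Y) *\<^sub>v v = (X * Y) *\<^sub>v w + (X * Y) *\<^sub>v w'"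
      unfolding ww(3) by (rule mult_add_distrib_mat_vec[OF mult_carrier_mat[OF X Y] wc w'c])
    also have "\<dots> = X *\<^sub>v (Y *\<^sub>v w) + X *\<^sub>v (Y *\<^sub>v w')"
      using assoc_mult_mat_vec[OF X Y wc] assoc_mult_mat_vec[OF X Y w'c] by simp
    finally show ?thesis .
  qed
  show "(A * B) *\<^sub>v v = (B * A) *\<^sub>v v"
    using e[OF A B] e[OF B A] W[OF ww(1)] W'[OF ww(2)] by simp
qed

lemma exists_irr_noncomm:
  assumes grp: "group G" and fin: "finite (carrier G)" and NG: "N \<subseteq> carrier G"
  shows "is_rep G k \<sigma> \<Longrightarrow> (\<forall>x\<in>N. \<sigma> x = 1\<^sub>m k) \<Longrightarrow>
     \<not> (\<forall>g\<in>carrier G. \<forall>h\<in>carrier G. \<sigma> g * \<sigma> h = \<sigma> h * \<sigma> g) \<Longrightarrow>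
     \<exists>d \<rho>. is_irr_rep G d \<rho> \<and> (\<forall>x\<in>N. \<rho> x = 1\<^sub>m d) \<and>
        \<not> (\<forall>g\<in>carrier G. \<forall>h\<in>carrier G. \<rho> g * \<rho> h = \<rho> h * \<rho> g)"
proof (induction k arbitrary: \<sigma> rule: less_induct)
  case (less k \<sigma>)
  interpret frep G k \<sigma> using frepI[OF grp fin less.prems(1)] .
  show ?case
  proof (cases "is_irr_rep G k \<sigma>")
    case True
    then show ?thesis using less.prems by blast
  next
    case False
    then obtain W where W: "is_subspace k W" "W \<noteq> {0\<^sub>v k}" "W \<noteq> carrier_vec k"
      "\<forall>g\<in>carrier G. \<forall>w\<in>W. \<sigma> g *\<^sub>v w \<in> W"
      using less.prems(1) unfolding is_irr_rep_def by blast
    have Winv: "\<And>g w. g \<in> carrier G \<Longrightarrow> w \<in> W \<Longrightarrow> \<sigma> g *\<^sub>v w \<in> W" using W(4) by blast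
    obtain W' where W': "is_subspace k W'" "\<forall>g\<in>carrier G. \<forall>u\<in>W'. \<sigma> g *\<^sub>v u \<in> W'"
      "W' \<noteq> {0\<^sub>v k}" "W' \<noteq> carrier_vec k" "\<forall>v\<in>carrier_vec k. \<exists>u\<in>W. \<exists>u'\<in>W'. v = u + u'"
      using complement[OF W(1) Winv W(2) W(3)] by blast
    have W'inv: "\<And>g w. g \<in> carrier G \<Longrightarrow> w \<in> W' \<Longrightarrow> \<sigma> g *\<^sub>v w \<in> W'" using W'(2) by blast
    obtain m1 S1 where S1: "0 < m1" "m1 < k" "is_rep G m1 S1" "\<forall>g\<in>carrier G. \<sigma> g = 1\<^sub>m k \<longrightarrow> S1 g = 1\<^sub>m m1"
      "(\<forall>g\<in>carrier G. \<forall>h\<in>carrier G. S1 g * S1 h = S1 h * S1 g) \<longrightarrow>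
        (\<forall>g\<in>carrier G. \<forall>h\<in>carrier G. \<forall>u\<in>W. \<sigma> g *\<^sub>v (\<sigma> h *\<^sub>v u) = \<sigma> h *\<^sub>v (\<sigma> g *\<^sub>v u))"
      using subrep[OF W(1) Winv W(2) W(3)] by blast
    obtain m2 S2 where S2: "0 < m2" "m2 < k" "is_rep G m2 S2" "\<forall>g\<in>carrier G. \<sigma> g = 1\<^sub>m k \<longrightarrow> S2 g = 1\<^sub>m m2"
      "(\<forall>g\<in>carrier G. \<forall>h\<in>carrier G. S2 g * S2 h = S2 h * S2 g) \<longrightarrow>
        (\<forall>g\<in>carrier G. \<forall>h\<in>carrier G. \<forall>u\<in>W'. \<sigma> g *\<^sub>v (\<sigma> h *\<^sub>v u) = \<sigma> h *\<^sub>v (\<sigma> g *\<^sub>v u))"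
      using subrep[OF W'(1) W'inv W'(3) W'(4)] by blast
    have N1: "\<forall>x\<in>N. S1 x = 1\<^sub>m m1" using S1(4) less.prems(2) NG by blast
    have N2: "\<forall>x\<in>N. S2 x = 1\<^sub>m m2" using S2(4) less.prems(2) NG by blast
    show ?thesis
    proof (cases "\<forall>g\<in>carrier G. \<forall>h\<in>carrier G. S1 g * S1 h = S1 h * S1 g")
      case False
      then show ?thesis using less.IH[OF S1(2) S1(3) N1 False] by blast
    next
      case True1: True
      show ?thesis
      proof (cases "\<forall>g\<in>carrier G. \<forall>h\<in>carrier G. S2 g * S2 h = S2 h * S2 g")
        case False
        then show ?thesis using less.IH[OF S2(2) S2(3) N2 False] by blast
      next
        case True2: True
        have c1: "\<forall>g\<in>carrier G. \<forall>h\<in>carrier G. \<forall>u\<in>W. \<sigma> g *\<^sub>v (\<sigma> h *\<^sub>v u) = \<sigma> h *\<^sub>v (\<sigma> g *\<^sub>v u)"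
          using S1(5) True1 by blast
        have c2: "\<forall>g\<in>carrier G. \<forall>h\<in>carrier G. \<forall>u\<in>W'. \<sigma> g *\<^sub>v (\<sigma> h *\<^sub>v u) = \<sigma> h *\<^sub>v (\<sigma> g *\<^sub>v u)"
          using S2(5) True2 by blast
        have Wc: "W \<subseteq> carrier_vec k" using W(1) unfolding is_subspace_def by blast
        have W'c: "W' \<subseteq> carrier_vec k" using W'(1) unfolding is_subspace_def by blast
        have "\<forall>g\<in>carrier G. \<forall>h\<in>carrier G. \<sigma> g * \<sigma> h = \<sigma> h * \<sigma> g"
        proof (intro ballI)
          fix g h assume g: "g \<in> carrier G" and h: "h \<in> carrier G"
          show "\<sigma> g * \<sigma> h = \<sigma> h * \<sigma> g"
            by (rule comm_on_sum[OF Rc[OF g] Rc[OF h], of W W'])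
              (use c1 c2 g h Wc W'c W'(5) in blast)+
        qed
        thus ?thesis using less.prems(3) by blast
      qed
    qed
  qed
qed


lemma (in group) inv_cancel_l1: "x \<in> carrier G \<Longrightarrow> y \<in> carrier G \<Longrightarrow> x \<otimes> (inv x \<otimes> y) = y"
  by (simp add: m_assoc[symmetric])

lemma (in group) inv_cancel_l2: "x \<in> carrier G \<Longrightarrow> y \<in> carrier G \<Longrightarrow> inv x \<otimes> (x \<otimes> y) = y"
  by (simp add: m_assoc[symmetric])

lemma (in group) lcos_eq_iff: assumes N: "subgroup N G" and a: "a \<in> carrier G" and b: "b \<in> carrier G"
  shows "(l_coset G a N = l_coset G b N) \<longleftrightarrow> inv a \<otimes> b \<in> N"
proof
  assume eq: "l_coset G a N = l_coset G b N"
  have "b \<in> l_coset G b N" unfolding l_coset_def using subgroup.one_closed[OF N] b by force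
  hence "b \<in> l_coset G a N" using eq by simp
  then obtain x where x: "x \<in> N" "b = a \<otimes> x" unfolding l_coset_def by blast
  have "x \<in> carrier G" using x(1) subgroup.subset[OF N] by blast
  hence "inv a \<otimes> b = x" using x(2) a by (simp add: inv_cancel_l2)
  thus "inv a \<otimes> b \<in> N" using x(1) by simp
next
  assume "inv a \<otimes> b \<in> N"
  hence "b \<in> l_coset G a N" using subgroup.lcos_module_rev[OF N is_group a b] by blast
  thus "l_coset G a N = l_coset G b N" using l_repr_independence[OF _ a N] by blast
qed

lemma (in group) coset_rep:
  assumes fin: "finite (carrier G)" and nN: "N \<lhd> G"
    and der: "\<not> derived G (carrier G) \<subseteq> N"
  shows "\<exists>m R. is_rep G m R \<and> (\<forall>x\<in>N. R x = 1\<^sub>m m) \<and>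
            \<not> (\<forall>g\<in>carrier G. \<forall>h\<in>carrier G. R g * R h = R h * R g)"
proof -
  interpret normal N G by fact
  have sgN: "subgroup N G" using normal_imp_subgroup[OF nN] .
  have NG: "N \<subseteq> carrier G" using subgroup.subset[OF sgN] .
  define C where "C = (\<lambda>a. l_coset G a N) ` carrier G"
  have finC: "finite C" unfolding C_def using fin by simp
  define m where "m = card C"
  obtain e where e: "bij_betw e {0..<m} C" unfolding m_def using ex_bij_betw_nat_finite[OF finC] by blast
  have e_in: "e j \<in> C" if "j < m" for j using e that unfolding bij_betw_def by auto
  have e_inj: "e i = e j \<longleftrightarrow> i = j" if "i < m" "j < m" for i j
    using e that unfolding bij_betw_def inj_on_def by auto
  have e_surj: "\<exists>l<m. e l = X" if "X \<in> C" for X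
    using e that unfolding bij_betw_def by (metis atLeastLessThan_iff imageE)
  have C_sub: "X \<subseteq> carrier G" if "X \<in> C" for X
    using that l_coset_subset_G[OF NG] unfolding C_def by blast
  have act: "l_coset G g X \<in> C" if g: "g \<in> carrier G" and X: "X \<in> C" for g X
  proof -
    obtain a where a: "a \<in> carrier G" "X = l_coset G a N" using X unfolding C_def by blast
    have "l_coset G g X = l_coset G (g \<otimes> a) N" using lcos_m_assoc[OF NG g a(1)] a(2) by simp
    thus ?thesis unfolding C_def using g a(1) by blast
  qed
  define R where "R g = mat m m (\<lambda>(i,j). if e i = l_coset G g (e j) then (1::complex) else 0)" for g
  have Rc: "R g \<in> carrier_mat m m" for g unfolding R_def carrier_mat_def by simp
  have Rd: "dim_row (R g) = m" "dim_col (R g) = m" for g unfolding R_def by simp_all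
  have Rij: "R g $$ (i,j) = (if e i = l_coset G g (e j) then 1 else 0)" if "i < m" "j < m" for g i j
    unfolding R_def using that by simp
  have Rmult: "R (g \<otimes> h) = R g * R h" if g: "g \<in> carrier G" and h: "h \<in> carrier G" for g h
  proof (rule eq_matI)
    fix i j assume "i < dim_row (R g * R h)" "j < dim_col (R g * R h)"
    hence i: "i < m" and j: "j < m" by (simp_all add: Rd)
    obtain l0 where l0: "l0 < m" "e l0 = l_coset G h (e j)" using e_surj[OF act[OF h e_in[OF j]]] by blast
    have iff: "e l = l_coset G h (e j) \<longleftrightarrow> l = l0" if "l < m" for l using e_inj[OF that l0(1)] l0(2) by simp
    have "(R g * R h) $$ (i,j) = (\<Sum>l<m. R g $$ (i,l) * R h $$ (l,j))"
      by (rule mult_index[OF Rc Rc i j])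
    also have "\<dots> = (\<Sum>l<m. if l = l0 then (if e i = l_coset G g (e l0) then 1 else 0) else 0)"
      by (intro sum.cong refl) (simp add: Rij i j iff)
    also have "\<dots> = (if e i = l_coset G g (e l0) then 1 else 0)" using l0(1) by (simp add: sum.delta)
    also have "l_coset G g (e l0) = l_coset G (g \<otimes> h) (e j)" unfolding l0(2)
      by (rule lcos_m_assoc[OF C_sub[OF e_in[OF j]] g h])
    finally show "R (g \<otimes> h) $$ (i,j) = (R g * R h) $$ (i,j)" using Rij[OF i j] by simp
  qed (simp_all add: Rd)
  have idR: "R g = 1\<^sub>m m" if g: "g \<in> carrier G" and fix_all: "\<And>X. X \<in> C \<Longrightarrow> l_coset G g X = X" for g
  proof (rule eq_matI)
    fix i j assume "i < dim_row (1\<^sub>m m :: complex mat)" "j < dim_col (1\<^sub>m m :: complex mat)"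
    hence i: "i < m" and j: "j < m" by simp_all
    show "R g $$ (i,j) = 1\<^sub>m m $$ (i,j)" using Rij[OF i j] fix_all[OF e_in[OF j]] e_inj[OF i j] i j by simp
  qed (simp_all add: Rd)
  have R1: "R \<one> = 1\<^sub>m m" by (rule idR) (simp_all add: lcos_mult_one C_sub)
  have NC: "N \<in> C" unfolding C_def using lcos_mult_one[OF NG] by force
  have mpos: "0 < m" unfolding m_def using finC NC card_gt_0_iff by blast
  have rep: "is_rep G m R" unfolding is_rep_def using mpos Rc R1 Rmult by blast
  have RN: "\<forall>x\<in>N. R x = 1\<^sub>m m"
  proof
    fix x assume x: "x \<in> N"
    have xc: "x \<in> carrier G" using x NG by blast
    show "R x = 1\<^sub>m m"
    proof (rule idR[OF xc])
      fix X assume "X \<in> C"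
      then obtain a where a: "a \<in> carrier G" "X = l_coset G a N" unfolding C_def by blast
      have "inv (x \<otimes> a) \<otimes> a = inv a \<otimes> inv x \<otimes> a" using xc a(1) by (simp add: inv_mult_group)
      moreover have "inv a \<otimes> inv x \<otimes> a \<in> N" using inv_op_closed1[OF a(1)] x by (simp add: m_inv_consistent)
      ultimately have "inv (x \<otimes> a) \<otimes> a \<in> N" by simp
      hence "l_coset G (x \<otimes> a) N = l_coset G a N" using lcos_eq_iff[OF sgN _ a(1)] xc a(1) by simp
      thus "l_coset G x X = X" using a lcos_m_assoc[OF NG xc a(1)] by simp
    qed
  qed
  obtain g h where gh: "g \<in> carrier G" "h \<in> carrier G" "g \<otimes> h \<otimes> inv g \<otimes> inv h \<notin> N"
  proof -
    have "\<not> derived_set G (carrier G) \<subseteq> N"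
    proof
      assume "derived_set G (carrier G) \<subseteq> N"
      hence "derived G (carrier G) \<subseteq> N" unfolding derived_def using generate_subgroup_incl[OF _ sgN] by blast
      thus False using der by blast
    qed
    thus ?thesis using that by blast
  qed
  have noncomm: "\<not> (R g * R h = R h * R g)"
  proof
    assume c: "R g * R h = R h * R g"
    have gh1: "g \<otimes> h \<in> carrier G" and hg1: "h \<otimes> g \<in> carrier G" using gh by simp_all
    have eqR: "R (g \<otimes> h) = R (h \<otimes> g)" using Rmult[OF gh(1) gh(2)] Rmult[OF gh(2) gh(1)] c by simp
    obtain j0 where j0: "j0 < m" "e j0 = N" using e_surj[OF NC] by blast
    obtain i0 where i0: "i0 < m" "e i0 = l_coset G (g \<otimes> h) N" using e_surj[OF act[OF gh1 NC]] by blast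
    have "R (g \<otimes> h) $$ (i0,j0) = 1" using Rij[OF i0(1) j0(1)] i0 j0 by simp
    hence "R (h \<otimes> g) $$ (i0,j0) = 1" using eqR by simp
    hence "e i0 = l_coset G (h \<otimes> g) (e j0)" using Rij[OF i0(1) j0(1)] by (simp split: if_splits)
    hence "l_coset G (h \<otimes> g) N = l_coset G (g \<otimes> h) N" using i0 j0 by simp
    hence x: "inv (h \<otimes> g) \<otimes> (g \<otimes> h) \<in> N" using lcos_eq_iff[OF sgN hg1 gh1] by simp
    have "(h \<otimes> g) \<otimes> (inv (h \<otimes> g) \<otimes> (g \<otimes> h)) \<otimes> inv (h \<otimes> g) \<in> N"
      using inv_op_closed2[OF hg1 x] .
    moreover have "(h \<otimes> g) \<otimes> (inv (h \<otimes> g) \<otimes> (g \<otimes> h)) \<otimes> inv (h \<otimes> g) = g \<otimes> h \<otimes> inv g \<otimes> inv h"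
      using gh(1,2) by (simp add: inv_cancel_l1 inv_mult_group m_assoc)
    ultimately show False using gh(3) by simp
  qed
  show ?thesis using rep RN noncomm gh(1,2) by blast
qed


lemma one_by_one_comm: "A \<in> carrier_mat 1 1 \<Longrightarrow> B \<in> carrier_mat 1 1 \<Longrightarrow> A * B = B * (A :: complex mat)"
  by (rule eq_matI) (simp_all add: scalar_prod_def mult.commute)

lemma triv_irr: assumes grp: "group G" shows "is_irr_rep G 1 (\<lambda>_. 1\<^sub>m 1)"
proof -
  have rep: "is_rep G 1 (\<lambda>_. 1\<^sub>m 1)" unfolding is_rep_def by simp
  have "W = carrier_vec 1" if W: "is_subspace 1 W" "W \<noteq> {0\<^sub>v 1}" for W
  proof
    show "W \<subseteq> carrier_vec 1" using W(1) unfolding is_subspace_def by blast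
    have z: "0\<^sub>v 1 \<in> W" using W(1) unfolding is_subspace_def by blast
    obtain w where w: "w \<in> W" "w \<noteq> 0\<^sub>v 1" using W(2) z by blast
    have wc: "w \<in> carrier_vec 1" using w(1) W(1) unfolding is_subspace_def by blast
    have w0: "w $ 0 \<noteq> 0"
    proof
      assume "w $ 0 = 0"
      hence "w = 0\<^sub>v 1" using wc by (intro eq_vecI) (simp_all add: less_Suc_eq)
      thus False using w(2) by simp
    qed
    show "carrier_vec 1 \<subseteq> W"
    proof
      fix v :: "complex vec" assume v: "v \<in> carrier_vec 1"
      have "v = (v $ 0 / w $ 0) \<cdot>\<^sub>v w" using v wc w0 by (intro eq_vecI) (simp_all add: less_Suc_eq)
      moreover have "(v $ 0 / w $ 0) \<cdot>\<^sub>v w \<in> W" using W(1) w(1) unfolding is_subspace_def by blast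
      ultimately show "v \<in> W" by simp
    qed
  qed
  thus ?thesis using rep unfolding is_irr_rep_def by blast
qed

lemma (in group) comm_identity: "z \<in> carrier G \<Longrightarrow> g \<in> carrier G \<Longrightarrow>
  (z \<otimes> g \<otimes> inv z \<otimes> inv g) \<otimes> (g \<otimes> z) = z \<otimes> g"
  by (simp add: m_assoc inv_cancel_l2)

theorem mainTheorem7:
  fixes G :: "('g, 'b) monoid_scheme" and N :: "'g set" and \<chi> :: "'g \<Rightarrow> complex"
  assumes "group G" and "finite (carrier G)"
    and "GVZ G" and "card (cd G) = 2"
    and "N \<lhd> G" and "\<chi> \<in> nl G"
    and "\<not> derived G (carrier G) \<subseteq> N"
    and "comm_subgroup G (char_center G \<chi>) (carrier G) \<subseteq> N"
  shows "N \<subseteq> char_center G \<chi>"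
proof -
  note grp = assms(1) and fin = assms(2) and gvz = assms(3) and cd2 = assms(4)
    and nN = assms(5) and nl = assms(6) and der = assms(7) and comm = assms(8)
  have NG: "N \<subseteq> carrier G" using subgroup.subset[OF normal_imp_subgroup[OF nN]] .
  obtain n \<rho> where irr\<rho>: "is_irr_rep G n \<rho>" and chi: "\<chi> = character_of G \<rho>"
    using nl unfolding nl_def Irr_def by blast
  have chi1: "\<chi> \<one>\<^bsub>G\<^esub> = of_nat n" using char_one[OF grp irr_rep[OF irr\<rho>]] chi by simp
  have n1: "n \<noteq> 1" using nl chi1 unfolding nl_def by auto
  obtain k \<sigma> where \<sigma>: "is_rep G k \<sigma>" "\<forall>x\<in>N. \<sigma> x = 1\<^sub>m k"
      "\<not> (\<forall>g\<in>carrier G. \<forall>h\<in>carrier G. \<sigma> g * \<sigma> h = \<sigma> h * \<sigma> g)"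
    using group.coset_rep[OF grp fin nN der] by blast
  obtain d \<tau> where \<tau>: "is_irr_rep G d \<tau>" "\<forall>x\<in>N. \<tau> x = 1\<^sub>m d"
      "\<not> (\<forall>g\<in>carrier G. \<forall>h\<in>carrier G. \<tau> g * \<tau> h = \<tau> h * \<tau> g)"
    using exists_irr_noncomm[OF grp fin NG \<sigma>] by blast
  have rep\<tau>: "is_rep G d \<tau>" using irr_rep[OF \<tau>(1)] .
  have d1: "d \<noteq> 1"
  proof
    assume d: "d = 1"
    have "\<forall>g\<in>carrier G. \<forall>h\<in>carrier G. \<tau> g * \<tau> h = \<tau> h * \<tau> g"
      using rep_carrier[OF rep\<tau>] d one_by_one_comm by blast
    thus False using \<tau>(3) by blast
  qed
  let ?\<psi> = "character_of G \<tau>"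
  have psi1: "?\<psi> \<one>\<^bsub>G\<^esub> = of_nat d" using char_one[OF grp rep\<tau>] .
  have cd1: "1 \<in> cd G"
  proof -
    have "character_of G (\<lambda>_. 1\<^sub>m 1) \<in> Irr G" using irr_in_Irr[OF triv_irr[OF grp]] .
    moreover have "character_of G (\<lambda>_. 1\<^sub>m 1) \<one>\<^bsub>G\<^esub> = 1"
      using char_one[OF grp irr_rep[OF triv_irr[OF grp]]] by simp
    ultimately show ?thesis unfolding cd_def by force
  qed
  have chiIrr: "\<chi> \<in> Irr G" using nl unfolding nl_def by blast
  have cdn: "of_nat n \<in> cd G" unfolding cd_def
    by (rule rev_image_eqI[OF chiIrr]) (use chi1 in simp)
  have cdd: "of_nat d \<in> cd G" unfolding cd_def
    by (rule rev_image_eqI[OF irr_in_Irr[OF \<tau>(1)]]) (use psi1 in simp)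
  have nd: "n = d"
  proof (rule ccontr)
    assume "n \<noteq> d"
    hence "card {1, of_nat n, of_nat d :: complex} = 3" using n1 d1 by simp
    moreover have "{1, of_nat n, of_nat d :: complex} \<subseteq> cd G" using cd1 cdn cdd by blast
    moreover have "finite (cd G)" using cd2 card.infinite by fastforce
    ultimately have "3 \<le> card (cd G)" by (metis card_mono)
    thus False using cd2 by simp
  qed
  define Z\<chi> where "Z\<chi> = char_center G \<chi>"
  define Z\<psi> where "Z\<psi> = char_center G ?\<psi>"
  have c1: "card Z\<chi> * n^2 = card (carrier G)" unfolding Z\<chi>_def chi using gvz_card[OF grp fin gvz irr\<rho>] .
  have c2: "card Z\<psi> * d^2 = card (carrier G)" unfolding Z\<psi>_def using gvz_card[OF grp fin gvz \<tau>(1)] .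
  have npos: "0 < n" using rep_pos[OF irr_rep[OF irr\<rho>]] .
  have e12: "card Z\<chi> * d^2 = card Z\<psi> * d^2" using c1 c2 nd by simp
  have "d^2 \<noteq> 0" using npos nd by simp
  hence ceq: "card Z\<chi> = card Z\<psi>" using e12 by simp
  have sub: "Z\<chi> \<subseteq> Z\<psi>"
  proof
    fix z assume z: "z \<in> Z\<chi>"
    have zc: "z \<in> carrier G" using z unfolding Z\<chi>_def char_center_def by blast
    show "z \<in> Z\<psi>" unfolding Z\<psi>_def
    proof (rule scalar_center[OF grp fin \<tau>(1) zc])
      fix g assume g: "g \<in> carrier G"
      let ?c = "z \<otimes>\<^bsub>G\<^esub> g \<otimes>\<^bsub>G\<^esub> inv\<^bsub>G\<^esub> z \<otimes>\<^bsub>G\<^esub> inv\<^bsub>G\<^esub> g"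
      have "?c \<in> comm_subgroup G (char_center G \<chi>) (carrier G)"
        unfolding comm_subgroup_def using z g unfolding Z\<chi>_def by (intro generate.incl) blast
      hence cN: "?c \<in> N" using comm by blast
      have cc: "?c \<in> carrier G" using cN NG by blast
      have gz: "g \<otimes>\<^bsub>G\<^esub> z \<in> carrier G" using g zc grp by (simp add: group.is_monoid monoid.m_closed)
      have "\<tau> z * \<tau> g = \<tau> (z \<otimes>\<^bsub>G\<^esub> g)" using rep_mult[OF rep\<tau> zc g] by simp
      also have "\<dots> = \<tau> (?c \<otimes>\<^bsub>G\<^esub> (g \<otimes>\<^bsub>G\<^esub> z))" using group.comm_identity[OF grp zc g] by simp
      also have "\<dots> = \<tau> ?c * \<tau> (g \<otimes>\<^bsub>G\<^esub> z)" by (rule rep_mult[OF rep\<tau> cc gz])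
      also have "\<dots> = \<tau> (g \<otimes>\<^bsub>G\<^esub> z)" using \<tau>(2) cN rep_carrier[OF rep\<tau> gz] by simp
      also have "\<dots> = \<tau> g * \<tau> z" by (rule rep_mult[OF rep\<tau> g zc])
      finally show "\<tau> z * \<tau> g = \<tau> g * \<tau> z" .
    qed
  qed
  have finZ\<psi>: "finite Z\<psi>" using fin unfolding Z\<psi>_def char_center_def by simp
  have "Z\<chi> = Z\<psi>" using card_subset_eq[OF finZ\<psi> sub ceq] .
  moreover have "N \<subseteq> Z\<psi>"
  proof
    fix x assume x: "x \<in> N"
    show "x \<in> Z\<psi>" unfolding Z\<psi>_def using ker_center[OF grp rep\<tau> _ ] x NG \<tau>(2) by blast
  qed
  ultimately show ?thesis unfolding Z\<chi>_def by simp
qed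

end
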